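(* Let $P=K\overline{K}$, $Q=L\overline{L}$ in $U_{K,L,twist}$, and $U=U_{K,L,twist}$. Then $U=PUP\oplus PUQ\oplus QUP\oplus QUQ$ (Pierce decomposition) and the following hold: (i) $\{PK^iE^jF^k\}_{i,j,k\ge0,\ j+k\text{ even}}\cup\{\overline{K}^iE^jF^k\}_{i>0,\,j,k\ge0,\ j+k\text{ even}}$ is a basis of $PUP$; (ii) $\{PK^iE^jF^k\}_{i,j,k\ge0,\ j+k\text{ odd}}\cup\{\overline{K}^iE^jF^k\}_{i>0,\,j,k\ge0,\ j+k\text{ odd}}$ is a basis of $PUQ$; (iii) $\{QL^iE^jF^k\}_{i,j,k\ge0,\ j+k\text{ odd}}\cup\{\overline{L}^iE^jF^k\}_{i>0,\,j,k\ge0,\ j+k\text{ odd}}$ is a basis of $QUP$; (iv) $\{QL^iE^jF^k\}_{i,j,k\ge0,\ j+k\text{ even}}\cup\{\overline{L}^iE^jF^k\}_{i>0,\,j,k\ge0,\ j+k\text{ even}}$ is a basis of $QUQ$. In particular, the union of these four families is a basis of $U_{K,L,twist}$.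
   Context: Fix $q\in\mathbb{C}$, $q\neq 0,\pm1$. $U_{K,L,twist}$ is the unital associative $\mathbb{C}$-algebra generated by $K,\overline{K},L,\overline{L},E,F$ subject to $K\overline{K}K=K$, $\overline{K}K\overline{K}=\overline{K}$, $K\overline{K}=\overline{K}K$, $L\overline{L}L=L$, $\overline{L}L\overline{L}=\overline{L}$, $L\overline{L}=\overline{L}L$, $K\overline{K}+L\overline{L}=\mathbf{1}$, $KE=q^2EL$, $LE=q^2EK$, $\overline{K}E=q^{-2}E\overline{L}$, $\overline{L}E=q^{-2}E\overline{K}$, $KF=q^{-2}FL$, $LF=q^{-2}FK$, $\overline{K}F=q^2F\overline{L}$, $\overline{L}F=q^2F\overline{K}$, $EF-FE=\frac{(K+L)-(\overline{K}+\overline{L})}{q-q^{-1}}$. Here $PK^0=P$, $QL^0=Q$. *)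

theory Defs
  imports Complex_Main
begin

text \<open>The free unital associative complex algebra on the six generators
  K, Kbar, L, Lbar, E, F is modelled by finitely supported functions from words
  (lists of generators) to complex numbers, with concatenation product.
  The algebra U_{K,L,twist} is its quotient by the two-sided ideal generated by
  the defining relations; statements about U are expressed modulo this ideal.\<close>

datatype gen = GK | GKb | GL | GLb | GE | GF

type_synonym fa = "gen list \<Rightarrow> complex"

definition FA :: "fa set" where
  "FA = {f. finite {w. f w \<noteq> 0}}"

definition fzero :: fa where "fzero = (\<lambda>w. 0)"
definition fone :: fa where "fone = (\<lambda>w. if w = [] then 1 else 0)"
definition fgen :: "gen \<Rightarrow> fa" where "fgen x = (\<lambda>w. if w = [x] then 1 else 0)"
definition fadd :: "fa \<Rightarrow> fa \<Rightarrow> fa" where "fadd f g = (\<lambda>w. f w + g w)"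
definition fsc :: "complex \<Rightarrow> fa \<Rightarrow> fa" where "fsc c f = (\<lambda>w. c * f w)"
definition fsub :: "fa \<Rightarrow> fa \<Rightarrow> fa" where "fsub f g = (\<lambda>w. f w - g w)"
definition fmul :: "fa \<Rightarrow> fa \<Rightarrow> fa" where
  "fmul f g = (\<lambda>w. \<Sum>i\<le>length w. f (take i w) * g (drop i w))"

primrec fpow :: "fa \<Rightarrow> nat \<Rightarrow> fa" where
  "fpow f 0 = fone"
| "fpow f (Suc n) = fmul f (fpow f n)"

definition lincomb :: "('i \<Rightarrow> complex) \<Rightarrow> ('i \<Rightarrow> fa) \<Rightarrow> 'i set \<Rightarrow> fa" where
  "lincomb c b J = (\<lambda>w. \<Sum>j\<in>J. c j * b j w)"

abbreviation "gK \<equiv> fgen GK"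
abbreviation "gKb \<equiv> fgen GKb"
abbreviation "gL \<equiv> fgen GL"
abbreviation "gLb \<equiv> fgen GLb"
abbreviation "gE \<equiv> fgen GE"
abbreviation "gF \<equiv> fgen GF"

abbreviation fmul3 :: "fa \<Rightarrow> fa \<Rightarrow> fa \<Rightarrow> fa" where "fmul3 a b c \<equiv> fmul (fmul a b) c"

definition rels :: "complex \<Rightarrow> fa set" where
  "rels q = {
     fsub (fmul3 gK gKb gK) gK,
     fsub (fmul3 gKb gK gKb) gKb,
     fsub (fmul gK gKb) (fmul gKb gK),
     fsub (fmul3 gL gLb gL) gL,
     fsub (fmul3 gLb gL gLb) gLb,
     fsub (fmul gL gLb) (fmul gLb gL),
     fsub (fadd (fmul gK gKb) (fmul gL gLb)) fone,
     fsub (fmul gK gE) (fsc (q^2) (fmul gE gL)),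
     fsub (fmul gL gE) (fsc (q^2) (fmul gE gK)),
     fsub (fmul gKb gE) (fsc (inverse (q^2)) (fmul gE gLb)),
     fsub (fmul gLb gE) (fsc (inverse (q^2)) (fmul gE gKb)),
     fsub (fmul gK gF) (fsc (inverse (q^2)) (fmul gF gL)),
     fsub (fmul gL gF) (fsc (inverse (q^2)) (fmul gF gK)),
     fsub (fmul gKb gF) (fsc (q^2) (fmul gF gLb)),
     fsub (fmul gLb gF) (fsc (q^2) (fmul gF gKb)),
     fsub (fsub (fmul gE gF) (fmul gF gE))
          (fsc (inverse (q - inverse q)) (fsub (fadd gK gL) (fadd gKb gLb)))}"

inductive_set ideal_gen :: "fa set \<Rightarrow> fa set" for R :: "fa set" where
  zero: "fzero \<in> ideal_gen R"
| gen: "r \<in> R \<Longrightarrow> a \<in> FA \<Longrightarrow> b \<in> FA \<Longrightarrow> fmul3 a r b \<in> ideal_gen R"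
| add: "x \<in> ideal_gen R \<Longrightarrow> y \<in> ideal_gen R \<Longrightarrow> fadd x y \<in> ideal_gen R"
| scale: "x \<in> ideal_gen R \<Longrightarrow> fsc c x \<in> ideal_gen R"

definition eqU :: "complex \<Rightarrow> fa \<Rightarrow> fa \<Rightarrow> bool" where
  "eqU q x y \<longleftrightarrow> fsub x y \<in> ideal_gen (rels q)"

definition inU :: "complex \<Rightarrow> fa set \<Rightarrow> fa \<Rightarrow> bool" where
  "inU q S x \<longleftrightarrow> (\<exists>s\<in>S. eqU q x s)"

definition basisU :: "complex \<Rightarrow> fa set \<Rightarrow> 'i set \<Rightarrow> ('i \<Rightarrow> fa) \<Rightarrow> bool" where
  "basisU q S J b \<longleftrightarrow>
     (\<forall>j\<in>J. b j \<in> FA \<and> inU q S (b j)) \<and>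
     (\<forall>x\<in>FA. inU q S x \<longrightarrow> (\<exists>J' c. J' \<subseteq> J \<and> finite J' \<and> eqU q x (lincomb c b J'))) \<and>
     (\<forall>J' c. J' \<subseteq> J \<and> finite J' \<and> eqU q (lincomb c b J') fzero \<longrightarrow> (\<forall>j\<in>J'. c j = 0))"

definition Pe :: fa where "Pe = fmul gK gKb"
definition Qe :: fa where "Qe = fmul gL gLb"

definition sandwich :: "fa \<Rightarrow> fa \<Rightarrow> fa set" where
  "sandwich X Y = {fmul3 X u Y | u. u \<in> FA}"

text \<open>Family indexed by (Inl (i,j,k)) = X*A^i*E^j*F^k (i \<ge> 0) and
  (Inr (i,j,k)) = Ab^i*E^j*F^k (i > 0), with parity condition on j+k.\<close>
definition fam :: "fa \<Rightarrow> fa \<Rightarrow> fa \<Rightarrow> (nat \<times> nat \<times> nat) + (nat \<times> nat \<times> nat) \<Rightarrow> fa" where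
  "fam X A Ab idx = (case idx of
      Inl (i, j, k) \<Rightarrow> fmul (fmul3 X (fpow A i) (fpow gE j)) (fpow gF k)
    | Inr (i, j, k) \<Rightarrow> fmul3 (fpow Ab i) (fpow gE j) (fpow gF k))"

definition famidx :: "bool \<Rightarrow> ((nat \<times> nat \<times> nat) + (nat \<times> nat \<times> nat)) set" where
  "famidx ev = {Inl (i, j, k) | i j k. even (j + k) = ev}
             \<union> {Inr (i, j, k) | i j k. i > 0 \<and> even (j + k) = ev}"

end

theory Submission
  imports Defs
begin


lemma fa_ext: "(\<And>w. f w = g w) \<Longrightarrow> f = (g::fa)" by auto

lemma fzero_FA[simp]: "fzero \<in> FA" by (simp add: FA_def fzero_def)
lemma fone_FA[simp]: "fone \<in> FA"
  unfolding FA_def fone_def mem_Collect_eq by (rule finite_subset[of _ "{[]}"]) auto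
lemma fgen_FA[simp]: "fgen x \<in> FA"
  unfolding FA_def fgen_def mem_Collect_eq by (rule finite_subset[of _ "{[x]}"]) auto
lemma fadd_FA[simp]: "f \<in> FA \<Longrightarrow> g \<in> FA \<Longrightarrow> fadd f g \<in> FA"
  unfolding FA_def fadd_def mem_Collect_eq by (rule finite_subset[of _ "{w. f w \<noteq> 0} \<union> {w. g w \<noteq> 0}"]) auto
lemma fsub_FA[simp]: "f \<in> FA \<Longrightarrow> g \<in> FA \<Longrightarrow> fsub f g \<in> FA"
  unfolding FA_def fsub_def mem_Collect_eq by (rule finite_subset[of _ "{w. f w \<noteq> 0} \<union> {w. g w \<noteq> 0}"]) auto
lemma fsc_FA[simp]: "f \<in> FA \<Longrightarrow> fsc c f \<in> FA"
  unfolding FA_def fsc_def mem_Collect_eq by (rule finite_subset[of _ "{w. f w \<noteq> 0}"]) auto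

lemma fmul_supp: "{w. fmul f g w \<noteq> 0} \<subseteq> (\<lambda>(u,v). u @ v) ` ({w. f w \<noteq> 0} \<times> {w. g w \<noteq> 0})"
proof
  fix w assume "w \<in> {w. fmul f g w \<noteq> 0}"
  then obtain i where "i \<in> {..length w}" "f (take i w) * g (drop i w) \<noteq> 0"
    unfolding fmul_def by (auto elim: sum.not_neutral_contains_not_neutral)
  then show "w \<in> (\<lambda>(u,v). u @ v) ` ({w. f w \<noteq> 0} \<times> {w. g w \<noteq> 0})"
    by (auto intro!: image_eqI[of _ _ "(take i w, drop i w)"])
qed

lemma fmul_FA[simp]: "f \<in> FA \<Longrightarrow> g \<in> FA \<Longrightarrow> fmul f g \<in> FA"
  unfolding FA_def mem_Collect_eq by (rule finite_subset[OF fmul_supp]) auto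

lemma fpow_FA[simp]: "f \<in> FA \<Longrightarrow> fpow f n \<in> FA"
  by (induct n) auto

lemma lincomb_FA[simp]: "finite J \<Longrightarrow> (\<And>j. j \<in> J \<Longrightarrow> b j \<in> FA) \<Longrightarrow> lincomb c b J \<in> FA"
proof (induct J rule: finite_induct)
  case empty
  then show ?case by (simp add: lincomb_def FA_def)
next
  case (insert x F)
  have "lincomb c b (insert x F) = fadd (fsc (c x) (b x)) (lincomb c b F)"
    using insert by (simp add: lincomb_def fadd_def fsc_def)
  then show ?case using insert by simp
qed

lemma fmul_assoc: "fmul (fmul a b) c = fmul a (fmul (b::fa) c)"
proof (rule fa_ext)
  fix w :: "gen list"
  let ?n = "length w"
  define G where "G j l = a (take j w) * b (take l (drop j w)) * c (drop (j+l) w)" for j l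
  have "fmul (fmul a b) c w = (\<Sum>i\<le>?n. \<Sum>j\<le>i. G j (i - j))"
    unfolding fmul_def G_def
    by (auto simp: sum_distrib_right min_def take_drop intro!: sum.cong)
  also have "\<dots> = (\<Sum>(j,l)\<in>{(j,l). j + l \<le> ?n}. G j l)"
    by (rule sum.triangle_reindex_eq[symmetric])
  also have "{(j,l). j + l \<le> ?n} = Sigma {..?n} (\<lambda>j. {..?n - j})" by auto
  also have "(\<Sum>(j,l)\<in>Sigma {..?n} (\<lambda>j. {..?n - j}). G j l) = (\<Sum>j\<le>?n. \<Sum>l\<le>?n-j. G j l)"
    by (rule sum.Sigma[symmetric]) auto
  also have "\<dots> = fmul a (fmul b c) w"
    unfolding fmul_def G_def
    by (auto simp: sum_distrib_left mult.assoc add.commute intro!: sum.cong)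
  finally show "fmul (fmul a b) c w = fmul a (fmul b c) w" .
qed

lemma fmul_fone_left[simp]: "fmul fone x = x"
proof (rule fa_ext)
  fix w :: "gen list"
  have "fmul fone x w = (\<Sum>i\<in>{0}. fone (take i w) * x (drop i w))"
    unfolding fmul_def by (rule sum.mono_neutral_right) (auto simp: fone_def)
  then show "fmul fone x w = x w" by (simp add: fone_def)
qed

lemma fmul_fone_right[simp]: "fmul x fone = x"
proof (rule fa_ext)
  fix w :: "gen list"
  have "fmul x fone w = (\<Sum>i\<in>{length w}. x (take i w) * fone (drop i w))"
    unfolding fmul_def by (rule sum.mono_neutral_right) (auto simp: fone_def)
  then show "fmul x fone w = x w" by (simp add: fone_def)
qed

lemma fmul_fzero_left[simp]: "fmul fzero x = fzero"
  and fmul_fzero_right[simp]: "fmul x fzero = fzero"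
  by (auto simp: fmul_def fzero_def)

lemma fmul_fadd_left: "fmul (fadd a b) c = fadd (fmul a c) (fmul b c)"
  and fmul_fadd_right: "fmul c (fadd a b) = fadd (fmul c a) (fmul c b)"
  and fmul_fsub_left: "fmul (fsub a b) c = fsub (fmul a c) (fmul b c)"
  and fmul_fsub_right: "fmul c (fsub a b) = fsub (fmul c a) (fmul c b)"
  and fmul_fsc_left: "fmul (fsc k a) c = fsc k (fmul a c)"
  and fmul_fsc_right: "fmul c (fsc k a) = fsc k (fmul c a)"
  by (auto simp: fmul_def fadd_def fsub_def fsc_def algebra_simps sum.distrib sum_subtractf sum_distrib_left)

lemma ideal_mul_left: "x \<in> ideal_gen R \<Longrightarrow> a \<in> FA \<Longrightarrow> fmul a x \<in> ideal_gen R"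
proof (induct x rule: ideal_gen.induct)
  case zero then show ?case by (simp add: ideal_gen.zero)
next
  case (gen r a' b) then show ?case
    by (metis fmul_FA fmul_assoc ideal_gen.gen)
next
  case (add x y) then show ?case by (simp add: fmul_fadd_right ideal_gen.add)
next
  case (scale x c) then show ?case by (simp add: fmul_fsc_right ideal_gen.scale)
qed

lemma ideal_mul_right: "x \<in> ideal_gen R \<Longrightarrow> a \<in> FA \<Longrightarrow> fmul x a \<in> ideal_gen R"
proof (induct x rule: ideal_gen.induct)
  case zero then show ?case by (simp add: ideal_gen.zero)
next
  case (gen r a' b) then show ?case
    by (metis fmul_FA fmul_assoc ideal_gen.gen)
next
  case (add x y) then show ?case by (simp add: fmul_fadd_left ideal_gen.add)
next
  case (scale x c) then show ?case by (simp add: fmul_fsc_left ideal_gen.scale)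
qed

lemma ideal_sub: "x \<in> ideal_gen R \<Longrightarrow> y \<in> ideal_gen R \<Longrightarrow> fsub x y \<in> ideal_gen R"
proof -
  assume "x \<in> ideal_gen R" "y \<in> ideal_gen R"
  then have "fadd x (fsc (-1) y) \<in> ideal_gen R" by (intro ideal_gen.add ideal_gen.scale)
  moreover have "fadd x (fsc (-1) y) = fsub x y" by (auto simp: fadd_def fsc_def fsub_def)
  ultimately show ?thesis by simp
qed

lemma ideal_eq: "x \<in> ideal_gen R \<Longrightarrow> x = y \<Longrightarrow> y \<in> ideal_gen R" by simp

lemma eqU_refl[simp]: "eqU q x x"
proof -
  have "fsub x x = fzero" by (auto simp: fsub_def fzero_def)
  then show ?thesis unfolding eqU_def by (simp add: ideal_gen.zero)
qed

lemma eqU_sym: "eqU q x y \<Longrightarrow> eqU q y x"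
  unfolding eqU_def
  by (drule ideal_gen.scale[where c="-1"]) (auto simp: fsc_def fsub_def elim: ideal_eq)

lemma eqU_trans: "eqU q x y \<Longrightarrow> eqU q y z \<Longrightarrow> eqU q x z"
  unfolding eqU_def
  by (drule (1) ideal_gen.add) (auto simp: fadd_def fsub_def elim: ideal_eq)

lemma eqU_add: "eqU q x y \<Longrightarrow> eqU q x' y' \<Longrightarrow> eqU q (fadd x x') (fadd y y')"
proof -
  assume "eqU q x y" "eqU q x' y'"
  then have "fadd (fsub x y) (fsub x' y') \<in> ideal_gen (rels q)" unfolding eqU_def by (rule ideal_gen.add)
  moreover have "fadd (fsub x y) (fsub x' y') = fsub (fadd x x') (fadd y y')"
    by (auto simp: fadd_def fsub_def)
  ultimately show ?thesis unfolding eqU_def by simp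
qed

lemma eqU_sub: "eqU q x y \<Longrightarrow> eqU q x' y' \<Longrightarrow> eqU q (fsub x x') (fsub y y')"
proof -
  assume "eqU q x y" "eqU q x' y'"
  then have "fsub (fsub x y) (fsub x' y') \<in> ideal_gen (rels q)" unfolding eqU_def by (rule ideal_sub)
  moreover have "fsub (fsub x y) (fsub x' y') = fsub (fsub x x') (fsub y y')"
    by (auto simp: fsub_def)
  ultimately show ?thesis unfolding eqU_def by simp
qed

lemma eqU_sc: "eqU q x y \<Longrightarrow> eqU q (fsc c x) (fsc c y)"
  unfolding eqU_def
  by (drule ideal_gen.scale[where c=c]) (auto simp: fsc_def fsub_def algebra_simps elim: ideal_eq)

lemma eqU_mul: "eqU q x y \<Longrightarrow> eqU q x' y' \<Longrightarrow> x \<in> FA \<Longrightarrow> y' \<in> FA \<Longrightarrow> eqU q (fmul x x') (fmul y y')"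
proof -
  assume a: "eqU q x y" "eqU q x' y'" "x \<in> FA" "y' \<in> FA"
  have "fmul x (fsub x' y') \<in> ideal_gen (rels q)"
    using a by (intro ideal_mul_left) (auto simp: eqU_def)
  moreover have "fmul (fsub x y) y' \<in> ideal_gen (rels q)"
    using a by (intro ideal_mul_right) (auto simp: eqU_def)
  ultimately have "fadd (fmul x (fsub x' y')) (fmul (fsub x y) y') \<in> ideal_gen (rels q)"
    by (rule ideal_gen.add)
  moreover have "fadd (fmul x (fsub x' y')) (fmul (fsub x y) y') = fsub (fmul x x') (fmul y y')"
    by (simp only: fmul_fsub_left fmul_fsub_right) (auto simp: fadd_def fsub_def)
  ultimately show ?thesis unfolding eqU_def by simp
qed

lemma eqU_rel: "r \<in> rels q \<Longrightarrow> eqU q r fzero"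
proof -
  assume "r \<in> rels q"
  then have "fmul3 fone r fone \<in> ideal_gen (rels q)" by (intro ideal_gen.gen) auto
  moreover have "fsub r fzero = r" by (auto simp: fsub_def fzero_def)
  ultimately show ?thesis unfolding eqU_def by simp
qed


definition uqrel :: "(complex \<Rightarrow> fa) \<Rightarrow> (complex \<Rightarrow> fa) \<Rightarrow> bool" where
  "uqrel X Y \<longleftrightarrow> (\<forall>q. X q \<in> FA \<and> Y q \<in> FA \<and> (q \<noteq> 0 \<longrightarrow> eqU q (X q) (Y q)))"

lemma uqrel_part_equivp: "part_equivp uqrel"
proof (rule part_equivpI)
  show "\<exists>x. uqrel x x" by (rule exI[of _ "\<lambda>q. fzero"]) (simp add: uqrel_def)
  show "symp uqrel" unfolding symp_def uqrel_def by (auto intro: eqU_sym)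
  show "transp uqrel" unfolding transp_def uqrel_def by (blast intro: eqU_trans)
qed

quotient_type uq = "complex \<Rightarrow> fa" / partial: uqrel
  by (rule uqrel_part_equivp)

lemma uqrel_eqI: "(\<And>q. X q \<in> FA) \<Longrightarrow> X = Y \<Longrightarrow> uqrel X Y"
  by (simp add: uqrel_def)

lemma uqrel_eqI': "(\<And>q. X q \<in> FA) \<Longrightarrow> (\<And>q. X q = Y q) \<Longrightarrow> uqrel X Y"
  by (simp add: uqrel_def)

lemma uqrelD: "uqrel X Y \<Longrightarrow> X q \<in> FA \<and> Y q \<in> FA \<and> (q \<noteq> 0 \<longrightarrow> eqU q (X q) (Y q))"
  by (simp add: uqrel_def)

instantiation uq :: ring
begin
lift_definition zero_uq :: uq is "\<lambda>q. fzero" by (simp add: uqrel_def)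
lift_definition plus_uq :: "uq \<Rightarrow> uq \<Rightarrow> uq" is "\<lambda>X Y q. fadd (X q) (Y q)"
  by (auto simp: uqrel_def intro: eqU_add)
lift_definition minus_uq :: "uq \<Rightarrow> uq \<Rightarrow> uq" is "\<lambda>X Y q. fsub (X q) (Y q)"
  by (auto simp: uqrel_def intro: eqU_sub)
lift_definition uminus_uq :: "uq \<Rightarrow> uq" is "\<lambda>X q. fsc (-1) (X q)"
  by (auto simp: uqrel_def intro: eqU_sc)
lift_definition times_uq :: "uq \<Rightarrow> uq \<Rightarrow> uq" is "\<lambda>X Y q. fmul (X q) (Y q)"
  by (auto simp: uqrel_def intro: eqU_mul)
instance proof
  fix a b c :: uq
  show "a + b + c = a + (b + c)"
    by transfer (rule uqrel_eqI', simp add: uqrel_def, simp add: fadd_def add.assoc)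
  show "a + b = b + a"
    by transfer (rule uqrel_eqI', simp add: uqrel_def, simp add: fadd_def add.commute)
  show "0 + a = a"
    by transfer (rule uqrel_eqI', simp add: uqrel_def, simp add: fadd_def fzero_def)
  show "- a + a = 0"
    by transfer (rule uqrel_eqI', simp add: uqrel_def, simp add: fadd_def fzero_def fsc_def)
  show "a - b = a + - b"
    by transfer (rule uqrel_eqI', simp add: uqrel_def, simp add: fadd_def fsub_def fsc_def)
  show "a * b * c = a * (b * c)"
    by transfer (rule uqrel_eqI', simp add: uqrel_def, simp add: fmul_assoc)
  show "(a + b) * c = a * c + b * c"
    by transfer (rule uqrel_eqI', simp add: uqrel_def, simp add: fmul_fadd_left)
  show "a * (b + c) = a * b + a * c"
    by transfer (rule uqrel_eqI', simp add: uqrel_def, simp add: fmul_fadd_right)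
qed
end

instantiation uq :: monoid_mult
begin
lift_definition one_uq :: uq is "\<lambda>q. fone" by (simp add: uqrel_def)
instance proof
  fix a :: uq
  show "1 * a = a" by transfer (rule uqrel_eqI', simp add: uqrel_def, simp)
  show "a * 1 = a" by transfer (rule uqrel_eqI', simp add: uqrel_def, simp)
qed
end

lift_definition Sc :: "(complex \<Rightarrow> complex) \<Rightarrow> uq" is "\<lambda>f q. fsc (f q) fone"
  by (auto simp: uqrel_def)
lift_definition G :: "gen \<Rightarrow> uq" is "\<lambda>g q. fgen g"
  by (auto simp: uqrel_def)

lemma Sc_comm: "Sc f * x = x * Sc f"
  by transfer (rule uqrel_eqI', simp add: uqrel_def, simp add: fmul_fsc_left fmul_fsc_right)

lemma Sc_mult: "Sc f * Sc g = Sc (\<lambda>q. f q * g q)"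
  by transfer (rule uqrel_eqI', simp add: uqrel_def, simp only: fmul_fsc_left fmul_fsc_right fmul_fone_left, simp add: fsc_def algebra_simps)

lemma Sc_add: "Sc f + Sc g = Sc (\<lambda>q. f q + g q)"
  by transfer (rule uqrel_eqI', simp add: uqrel_def, simp add: fadd_def fsc_def algebra_simps)

lemma Sc_one: "Sc (\<lambda>q. 1) = 1"
  by transfer (rule uqrel_eqI', simp add: uqrel_def, simp add: fsc_def)

lemma Sc_zero: "Sc (\<lambda>q. 0) = 0"
  by transfer (rule uqrel_eqI', simp add: uqrel_def, simp add: fsc_def fzero_def)



lemma uq_eq_iff: "(\<And>q. X q \<in> FA) \<Longrightarrow> (\<And>q. Y q \<in> FA) \<Longrightarrow> abs_uq X = abs_uq Y \<longleftrightarrow> uqrel X Y"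
  proof -
  assume "\<And>q. X q \<in> FA" "\<And>q. Y q \<in> FA"
  then have "uqrel X X" "uqrel Y Y" by (auto simp: uqrel_def)
  then show ?thesis using Quotient3_rel[OF Quotient3_uq, of X Y] by blast
qed


lemma uq_eqI: "(\<And>q. X q \<in> FA) \<Longrightarrow> (\<And>q. Y q \<in> FA) \<Longrightarrow> (\<And>q. q \<noteq> 0 \<Longrightarrow> eqU q (X q) (Y q))
  \<Longrightarrow> abs_uq X = abs_uq Y"
  by (simp add: uq_eq_iff uqrel_def)

lemma uq_eqD: "(\<And>q. X q \<in> FA) \<Longrightarrow> (\<And>q. Y q \<in> FA) \<Longrightarrow> abs_uq X = abs_uq Y \<Longrightarrow> q \<noteq> 0
  \<Longrightarrow> eqU q (X q) (Y q)"
  by (simp add: uq_eq_iff uqrel_def)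

lemma abs_mul: "(\<And>q. X q \<in> FA) \<Longrightarrow> (\<And>q. Y q \<in> FA) \<Longrightarrow> abs_uq (\<lambda>q. fmul (X q) (Y q)) = abs_uq X * abs_uq Y"
  by (subst times_uq.abs_eq) (auto simp: uqrel_def)

lemma abs_add: "(\<And>q. X q \<in> FA) \<Longrightarrow> (\<And>q. Y q \<in> FA) \<Longrightarrow> abs_uq (\<lambda>q. fadd (X q) (Y q)) = abs_uq X + abs_uq Y"
  by (subst plus_uq.abs_eq) (auto simp: uqrel_def)

lemma abs_sc: "(\<And>q. X q \<in> FA) \<Longrightarrow> abs_uq (\<lambda>q. fsc (c q) (X q)) = Sc c * abs_uq X"
proof -
  assume X: "\<And>q. X q \<in> FA"
  have "Sc c * abs_uq X = abs_uq (\<lambda>q. fmul (fsc (c q) fone) (X q))"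
    unfolding Sc.abs_eq by (rule abs_mul[symmetric]) (auto simp: X)
  also have "\<dots> = abs_uq (\<lambda>q. fsc (c q) (X q))" by (simp add: fmul_fsc_left)
  finally show ?thesis by simp
qed

lemma Sc_cong: "(\<And>q. q \<noteq> 0 \<Longrightarrow> f q = g q) \<Longrightarrow> Sc f = Sc g"
  unfolding Sc.abs_eq by (rule uq_eqI) auto

lemma eqU_of_rel: "fsub x y \<in> rels q \<Longrightarrow> eqU q x y"
proof -
  assume "fsub x y \<in> rels q"
  then have "eqU q (fsub x y) fzero" by (rule eqU_rel)
  moreover have "fsub (fsub x y) fzero = fsub x y" by (auto simp: fsub_def fzero_def)
  ultimately show ?thesis by (simp add: eqU_def)
qed


definition "uK = G GK"
definition "uKb = G GKb"
definition "uL = G GL"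
definition "uLb = G GLb"
definition "uE = G GE"
definition "uF = G GF"

definition "c2 = Sc (\<lambda>q. q^2)"
definition "ci = Sc (\<lambda>q. inverse (q^2))"
definition "cs = Sc (\<lambda>q. inverse (q - inverse q))"

lemmas gdefs = uK_def uKb_def uL_def uLb_def uE_def uF_def c2_def ci_def cs_def


lemma R1: "uK * uKb * uK = uK"
  apply (unfold gdefs)
  apply transfer
  apply (simp add: uqrel_def fmul_fsc_left)
  apply (intro allI impI eqU_of_rel)
  apply (simp add: rels_def)
  done
lemma R2: "uKb * uK * uKb = uKb"
  apply (unfold gdefs) apply transfer apply (simp add: uqrel_def fmul_fsc_left) apply (intro allI impI eqU_of_rel) by (simp add: rels_def)
lemma R3: "uK * uKb = uKb * uK"
  apply (unfold gdefs) apply transfer apply (simp add: uqrel_def fmul_fsc_left) apply (intro allI impI eqU_of_rel) by (simp add: rels_def)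
lemma R4: "uL * uLb * uL = uL"
  apply (unfold gdefs) apply transfer apply (simp add: uqrel_def fmul_fsc_left) apply (intro allI impI eqU_of_rel) by (simp add: rels_def)
lemma R5: "uLb * uL * uLb = uLb"
  apply (unfold gdefs) apply transfer apply (simp add: uqrel_def fmul_fsc_left) apply (intro allI impI eqU_of_rel) by (simp add: rels_def)
lemma R6: "uL * uLb = uLb * uL"
  apply (unfold gdefs) apply transfer apply (simp add: uqrel_def fmul_fsc_left) apply (intro allI impI eqU_of_rel) by (simp add: rels_def)
lemma R7: "uK * uKb + uL * uLb = 1"
  apply (unfold gdefs) apply transfer apply (simp add: uqrel_def fmul_fsc_left) apply (intro allI impI eqU_of_rel) by (simp add: rels_def)
lemma R8: "uK * uE = c2 * (uE * uL)"
  apply (unfold gdefs) apply transfer apply (simp add: uqrel_def fmul_fsc_left) apply (intro allI impI eqU_of_rel) by (simp add: rels_def)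
lemma R9: "uL * uE = c2 * (uE * uK)"
  apply (unfold gdefs) apply transfer apply (simp add: uqrel_def fmul_fsc_left) apply (intro allI impI eqU_of_rel) by (simp add: rels_def)
lemma R10: "uKb * uE = ci * (uE * uLb)"
  apply (unfold gdefs) apply transfer apply (simp add: uqrel_def fmul_fsc_left) apply (intro allI impI eqU_of_rel) by (simp add: rels_def)
lemma R11: "uLb * uE = ci * (uE * uKb)"
  apply (unfold gdefs) apply transfer apply (simp add: uqrel_def fmul_fsc_left) apply (intro allI impI eqU_of_rel) by (simp add: rels_def)
lemma R12: "uK * uF = ci * (uF * uL)"
  apply (unfold gdefs) apply transfer apply (simp add: uqrel_def fmul_fsc_left) apply (intro allI impI eqU_of_rel) by (simp add: rels_def)
lemma R13: "uL * uF = ci * (uF * uK)"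
  apply (unfold gdefs) apply transfer apply (simp add: uqrel_def fmul_fsc_left) apply (intro allI impI eqU_of_rel) by (simp add: rels_def)
lemma R14: "uKb * uF = c2 * (uF * uLb)"
  apply (unfold gdefs) apply transfer apply (simp add: uqrel_def fmul_fsc_left) apply (intro allI impI eqU_of_rel) by (simp add: rels_def)
lemma R15: "uLb * uF = c2 * (uF * uKb)"
  apply (unfold gdefs) apply transfer apply (simp add: uqrel_def fmul_fsc_left) apply (intro allI impI eqU_of_rel) by (simp add: rels_def)
lemma R16: "uE * uF - uF * uE = cs * (uK + uL - (uKb + uLb))"
  apply (unfold gdefs) apply transfer apply (simp add: uqrel_def fmul_fsc_left) apply (intro allI impI eqU_of_rel) by (simp add: rels_def)


definition "uP = uK * uKb"
definition "uQ = uL * uLb"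
definition "uT = uK + uL"
definition "uTb = uKb + uLb"

lemma c2_comm: "c2 * x = x * c2" and ci_comm: "ci * x = x * ci" and cs_comm: "cs * x = x * cs"
  unfolding c2_def ci_def cs_def by (rule Sc_comm)+

lemma c2_left: "x * (c2 * y) = c2 * (x * y)" by (metis c2_comm mult.assoc)
lemma ci_left: "x * (ci * y) = ci * (x * y)" by (metis ci_comm mult.assoc)
lemma cs_left: "x * (cs * y) = cs * (x * y)" by (metis cs_comm mult.assoc)

lemma c2ci: "c2 * ci = 1" and cic2: "ci * c2 = 1"
  unfolding c2_def ci_def Sc_mult by (auto simp: Sc_one[symmetric] intro!: Sc_cong)

lemma c2ci': "c2 * (ci * x) = x" and cic2': "ci * (c2 * x) = x"
  by (simp_all add: mult.assoc[symmetric] c2ci cic2)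

lemma PK: "uP * uK = uK" using R1 by (simp add: uP_def)
lemma KP: "uK * uP = uK" using R1 R3 by (simp add: uP_def mult.assoc[symmetric])
lemma KbP: "uKb * uP = uKb" using R2 by (simp add: uP_def mult.assoc[symmetric])
lemma PKb: "uP * uKb = uKb" using R2 R3 by (simp add: uP_def mult.assoc)
lemma QL: "uQ * uL = uL" using R4 by (simp add: uQ_def)
lemma LQ: "uL * uQ = uL" using R4 R6 by (simp add: uQ_def mult.assoc[symmetric])
lemma LbQ: "uLb * uQ = uLb" using R5 by (simp add: uQ_def mult.assoc[symmetric])
lemma QLb: "uQ * uLb = uLb" using R5 R6 by (simp add: uQ_def mult.assoc)

lemma PP: "uP * uP = uP" by (metis KbP mult.assoc uP_def)
lemma QQ: "uQ * uQ = uQ" by (metis LbQ mult.assoc uQ_def)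
lemma PQ1: "uP + uQ = 1" using R7 by (simp add: uP_def uQ_def)
lemma Qeq: "uQ = 1 - uP" using PQ1 by (simp add: algebra_simps flip: PQ1)
lemma PQ: "uP * uQ = 0" by (simp add: Qeq algebra_simps PP)
lemma QP: "uQ * uP = 0" by (simp add: Qeq algebra_simps PP)

lemma KQ: "uK * uQ = 0" by (metis KP PQ mult.assoc mult_zero_right)
lemma QK: "uQ * uK = 0" by (metis PK QP mult.assoc mult_zero_left)
lemma KbQ: "uKb * uQ = 0" by (metis KbP PQ mult.assoc mult_zero_right)
lemma QKb: "uQ * uKb = 0" by (metis PKb QP mult.assoc mult_zero_left)
lemma LP: "uL * uP = 0" by (metis LQ QP mult.assoc mult_zero_right)
lemma PL: "uP * uL = 0" by (metis QL PQ mult.assoc mult_zero_left)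
lemma LbP: "uLb * uP = 0" by (metis LbQ QP mult.assoc mult_zero_right)
lemma PLb: "uP * uLb = 0" by (metis QLb PQ mult.assoc mult_zero_left)

lemma KL: "uK * uL = 0" by (metis KQ QL mult.assoc mult_zero_left)
lemma KLb: "uK * uLb = 0" by (metis KQ QLb mult.assoc mult_zero_left)
lemma KbL: "uKb * uL = 0" by (metis KbQ QL mult.assoc mult_zero_left)
lemma KbLb: "uKb * uLb = 0" by (metis KbQ QLb mult.assoc mult_zero_left)
lemma LK: "uL * uK = 0" by (metis LP PK mult.assoc mult_zero_left)
lemma LKb: "uL * uKb = 0" by (metis LP PKb mult.assoc mult_zero_left)
lemma LbK: "uLb * uK = 0" by (metis LbP PK mult.assoc mult_zero_left)
lemma LbKb: "uLb * uKb = 0" by (metis LbP PKb mult.assoc mult_zero_left)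

lemma TTb: "uT * uTb = 1"
  by (simp add: uT_def uTb_def algebra_simps KLb LKb R7)
lemma TbT: "uTb * uT = 1"
  using R7 R3 R6 by (simp add: uT_def uTb_def algebra_simps KbL LbK)

lemma PT: "uP * uT = uK" by (simp add: uT_def algebra_simps PK PL)
lemma TP: "uT * uP = uK" by (simp add: uT_def algebra_simps KP LP)
lemma QT: "uQ * uT = uL" by (simp add: uT_def algebra_simps QK QL)
lemma TQ: "uT * uQ = uL" by (simp add: uT_def algebra_simps KQ LQ)
lemma PTb: "uP * uTb = uKb" by (simp add: uTb_def algebra_simps PKb PLb)
lemma TbP: "uTb * uP = uKb" by (simp add: uTb_def algebra_simps KbP LbP)
lemma QTb: "uQ * uTb = uLb" by (simp add: uTb_def algebra_simps QKb QLb)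
lemma TbQ: "uTb * uQ = uLb" by (simp add: uTb_def algebra_simps KbQ LbQ)

lemma TE: "uT * uE = c2 * (uE * uT)"
  by (simp add: uT_def algebra_simps R8 R9)
lemma TbE: "uTb * uE = ci * (uE * uTb)"
  by (simp add: uTb_def algebra_simps R10 R11)
lemma TF: "uT * uF = ci * (uF * uT)"
  by (simp add: uT_def algebra_simps R12 R13)
lemma TbF: "uTb * uF = c2 * (uF * uTb)"
  by (simp add: uTb_def algebra_simps R14 R15)

lemma PE: "uP * uE = uE * uQ"
proof -
  have "uP * uE = uK * (uKb * uE)" by (simp add: uP_def mult.assoc)
  also have "\<dots> = ci * (uK * uE * uLb)" by (simp add: R10 ci_left mult.assoc)
  also have "\<dots> = uE * uQ" by (simp add: R8 mult.assoc c2_left c2ci' cic2' uQ_def)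
  finally show ?thesis .
qed
lemma QE: "uQ * uE = uE * uP"
proof -
  have "uQ * uE = uL * (uLb * uE)" by (simp add: uQ_def mult.assoc)
  also have "\<dots> = ci * (uL * uE * uKb)" by (simp add: R11 ci_left mult.assoc)
  also have "\<dots> = uE * uP" by (simp add: R9 mult.assoc c2_left c2ci' cic2' uP_def)
  finally show ?thesis .
qed
lemma PF: "uP * uF = uF * uQ"
proof -
  have "uP * uF = uK * (uKb * uF)" by (simp add: uP_def mult.assoc)
  also have "\<dots> = c2 * (uK * uF * uLb)" by (simp add: R14 c2_left mult.assoc)
  also have "\<dots> = uF * uQ" by (simp add: R12 mult.assoc ci_left c2ci' cic2' uQ_def)
  finally show ?thesis .
qed
lemma QF: "uQ * uF = uF * uP"
proof -
  have "uQ * uF = uL * (uLb * uF)" by (simp add: uQ_def mult.assoc)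
  also have "\<dots> = c2 * (uL * uF * uKb)" by (simp add: R15 c2_left mult.assoc)
  also have "\<dots> = uF * uP" by (simp add: R13 mult.assoc ci_left c2ci' cic2' uP_def)
  finally show ?thesis .
qed

lemma ET: "uE * uT = ci * (uT * uE)"
proof -
  have "uE * uT = uT * (uTb * uE) * uT" by (simp add: mult.assoc[symmetric] TTb)
  also have "\<dots> = ci * (uT * uE)" by (simp add: TbE ci_left mult.assoc TbT)
  finally show ?thesis .
qed
lemma ETb: "uE * uTb = c2 * (uTb * uE)"
proof -
  have "uE * uTb = uTb * (uT * uE) * uTb" by (simp add: mult.assoc[symmetric] TbT)
  also have "\<dots> = c2 * (uTb * uE)" by (simp add: TE c2_left mult.assoc TTb)
  finally show ?thesis .
qed
lemma FT: "uF * uT = c2 * (uT * uF)"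
proof -
  have "uF * uT = uT * (uTb * uF) * uT" by (simp add: mult.assoc[symmetric] TTb)
  also have "\<dots> = c2 * (uT * uF)" by (simp add: TbF c2_left mult.assoc TbT)
  finally show ?thesis .
qed
lemma FTb: "uF * uTb = ci * (uTb * uF)"
proof -
  have "uF * uTb = uTb * (uT * uF) * uTb" by (simp add: mult.assoc[symmetric] TbT)
  also have "\<dots> = ci * (uTb * uF)" by (simp add: TF ci_left mult.assoc TTb)
  finally show ?thesis .
qed

lemma FE: "uF * uE = uE * uF - cs * uT + cs * uTb"
  using R16 by (simp add: uT_def uTb_def algebra_simps)

lemma EP: "uE * uP = uQ * uE" by (simp add: QE)
lemma EQ: "uE * uQ = uP * uE" by (simp add: PE)
lemma FP: "uF * uP = uQ * uF" by (simp add: QF)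
lemma FQ: "uF * uQ = uP * uF" by (simp add: PF)


inductive_set ScSpan :: "uq set \<Rightarrow> uq set" for A where
  ss_zero: "0 \<in> ScSpan A"
| ss_step: "a \<in> A \<Longrightarrow> x \<in> ScSpan A \<Longrightarrow> Sc f * a + x \<in> ScSpan A"

lemma Sc_left: "x * (Sc f * y) = Sc f * (x * y)" by (metis Sc_comm mult.assoc)

lemma Sc_neg1: "Sc (\<lambda>q. -1) * x = - x"
proof -
  have "Sc (\<lambda>q. -1) + 1 = 0" by (simp add: Sc_one[symmetric] Sc_add Sc_zero)
  then have "Sc (\<lambda>q. -1) = - 1" by (simp add: eq_neg_iff_add_eq_0)
  then show ?thesis by simp
qed

lemma Sc_neg: "Sc (\<lambda>q. - f q) * x = - (Sc f * x)"
proof -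
  have "Sc (\<lambda>q. - f q) = Sc (\<lambda>q. -1) * Sc f" by (simp add: Sc_mult)
  then show ?thesis by (simp add: mult.assoc Sc_neg1)
qed

lemma ss_add: "x \<in> ScSpan A \<Longrightarrow> y \<in> ScSpan A \<Longrightarrow> x + y \<in> ScSpan A"
  by (induct x rule: ScSpan.induct) (auto simp: add.assoc intro: ss_step)

lemma ss_sc: "x \<in> ScSpan A \<Longrightarrow> Sc g * x \<in> ScSpan A"
proof (induct x rule: ScSpan.induct)
  case ss_zero then show ?case by (simp add: ScSpan.ss_zero)
next
  case (ss_step a x f)
  have "Sc g * (Sc f * a + x) = Sc (\<lambda>q. g q * f q) * a + Sc g * x"
    by (simp add: distrib_left mult.assoc[symmetric] Sc_mult)
  then show ?case using ss_step by (auto intro: ScSpan.ss_step)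
qed

lemma ss_base: "a \<in> A \<Longrightarrow> a \<in> ScSpan A"
  using ScSpan.ss_step[OF _ ScSpan.ss_zero, of a A "\<lambda>q. 1"] by (simp add: Sc_one)

lemma ss_scbase: "a \<in> A \<Longrightarrow> Sc f * a \<in> ScSpan A"
  using ScSpan.ss_step[OF _ ScSpan.ss_zero, of a A f] by simp

lemma ss_neg: "x \<in> ScSpan A \<Longrightarrow> - x \<in> ScSpan A"
  using ss_sc[of x A "\<lambda>q. -1"] by (simp add: Sc_neg1)

lemma ss_diff: "x \<in> ScSpan A \<Longrightarrow> y \<in> ScSpan A \<Longrightarrow> x - y \<in> ScSpan A"
proof -
  assume "x \<in> ScSpan A" "y \<in> ScSpan A"
  then have "x + - y \<in> ScSpan A" by (intro ss_add ss_neg)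
  then show ?thesis by simp
qed

lemma ss_left: "x \<in> ScSpan A \<Longrightarrow> (\<And>a. a \<in> A \<Longrightarrow> y * a \<in> ScSpan B) \<Longrightarrow> y * x \<in> ScSpan B"
proof (induct x rule: ScSpan.induct)
  case ss_zero then show ?case by (simp add: ScSpan.ss_zero)
next
  case (ss_step a x f)
  have "y * (Sc f * a + x) = Sc f * (y * a) + y * x" by (simp add: distrib_left Sc_left)
  then show ?case using ss_step by (auto intro: ss_add ss_sc)
qed

lemma ss_right: "x \<in> ScSpan A \<Longrightarrow> (\<And>a. a \<in> A \<Longrightarrow> a * y \<in> ScSpan B) \<Longrightarrow> x * y \<in> ScSpan B"
proof (induct x rule: ScSpan.induct)
  case ss_zero then show ?case by (simp add: ScSpan.ss_zero)
next
  case (ss_step a x f)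
  have "(Sc f * a + x) * y = Sc f * (a * y) + x * y" by (simp add: distrib_right mult.assoc)
  then show ?case using ss_step by (auto intro: ss_add ss_sc)
qed

lemma comm_pow_right: "a * b = Sc g * (b * a) \<Longrightarrow> \<exists>f. a * b^n = Sc f * (b^n * a)"
proof (induct n)
  case 0 show ?case by (rule exI[of _ "\<lambda>q. 1"]) (simp add: Sc_one)
next
  case (Suc n)
  then obtain f where f: "a * b^n = Sc f * (b^n * a)" by blast
  have "a * b^Suc n = (a * b) * b^n" by (simp only: power_Suc mult.assoc)
  also have "\<dots> = Sc g * (b * (a * b^n))" by (simp only: Suc.prems mult.assoc)
  also have "\<dots> = Sc g * (b * (Sc f * (b^n * a)))" by (simp only: f)
  also have "\<dots> = Sc g * (Sc f * (b * (b^n * a)))" by (simp only: Sc_left[of b])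
  also have "\<dots> = Sc (\<lambda>q. g q * f q) * (b^Suc n * a)"
    by (simp only: power_Suc mult.assoc[symmetric] Sc_mult)
  finally show ?case by blast
qed

lemma comm_pow_left: "a * b = Sc g * (b * a) \<Longrightarrow> \<exists>f. a^n * b = Sc f * (b * a^n)"
proof (induct n)
  case 0 show ?case by (rule exI[of _ "\<lambda>q. 1"]) (simp add: Sc_one)
next
  case (Suc n)
  then obtain f where f: "a^n * b = Sc f * (b * a^n)" by blast
  have "a^Suc n * b = a * (a^n * b)" by (simp only: power_Suc mult.assoc)
  also have "\<dots> = a * (Sc f * (b * a^n))" by (simp only: f)
  also have "\<dots> = Sc f * ((a * b) * a^n)" by (simp only: Sc_left mult.assoc)
  also have "\<dots> = Sc f * (Sc g * (b * a) * a^n)" by (simp only: Suc.prems)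
  also have "\<dots> = Sc (\<lambda>q. f q * g q) * (b * a^Suc n)"
    by (simp only: power_Suc mult.assoc[symmetric] Sc_mult)
  finally show ?case by blast
qed

definition Tz :: "int \<Rightarrow> uq" where
  "Tz z = (if 0 \<le> z then uT ^ nat z else uTb ^ nat (- z))"

definition gP :: "bool \<Rightarrow> uq" where "gP b = (if b then uP else uQ)"

lemma TTbc: "uT * uTb = uTb * uT" by (simp add: TTb TbT)

lemma Tz0: "Tz 0 = 1" by (simp add: Tz_def)

lemma T_Tz: "uT * Tz z = Tz (z + 1)"
proof (cases "0 \<le> z")
  case True
  then have "nat (z + 1) = Suc (nat z)" by simp
  then show ?thesis using True by (simp add: Tz_def)
next
  case False
  then obtain n where n: "nat (- z) = Suc n" by (cases "nat (-z)") auto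
  then have zn: "z = - int (Suc n)" using False by (metis int_nat_eq minus_minus neg_0_le_iff_le nle_le)
  have "uT * uTb ^ Suc n = uTb ^ n" by (simp add: mult.assoc[symmetric] TTb)
  moreover have "Tz (z + 1) = uTb ^ n" using zn by (auto simp: Tz_def)
  ultimately show ?thesis using False n by (simp add: Tz_def)
qed

lemma Tb_Tz: "uTb * Tz z = Tz (z - 1)"
proof (cases "0 < z")
  case True
  then obtain n where n: "nat z = Suc n" by (cases "nat z") auto
  then have zn: "z = int (Suc n)" using True by (metis int_nat_eq less_imp_le)
  have "uTb * uT ^ Suc n = uT ^ n" by (simp add: mult.assoc[symmetric] TbT)
  moreover have "Tz (z - 1) = uT ^ n" using zn by (auto simp: Tz_def)
  ultimately show ?thesis using True n by (simp add: Tz_def)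
next
  case False
  then have "nat (- (z - 1)) = Suc (nat (-z))" by simp
  then show ?thesis using False by (simp add: Tz_def)
qed

lemma comm_Tz: "x * uT = uT * x \<Longrightarrow> x * uTb = uTb * x \<Longrightarrow> x * Tz z = Tz z * x"
  by (simp add: Tz_def power_commuting_commutes)

lemma Tz_T: "Tz z * uT = Tz (z + 1)"
  using comm_Tz[of uT z] TTbc by (simp add: T_Tz)
lemma Tz_Tb: "Tz z * uTb = Tz (z - 1)"
  using comm_Tz[of uTb z] TTbc by (simp add: Tb_Tz)

lemma gP_T: "gP b * uT = uT * gP b" by (simp add: gP_def PT TP QT TQ)
lemma gP_Tb: "gP b * uTb = uTb * gP b" by (simp add: gP_def PTb TbP QTb TbQ)
lemma gP_Tz: "gP b * Tz z = Tz z * gP b" by (rule comm_Tz[OF gP_T gP_Tb])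

lemma E_gP: "uE * gP b = gP (\<not> b) * uE" by (simp add: gP_def EP EQ)
lemma F_gP: "uF * gP b = gP (\<not> b) * uF" by (simp add: gP_def FP FQ)

lemma gP_gP: "gP b * gP c = (if b = c then gP b else 0)"
  by (simp add: gP_def PP QQ PQ QP)

lemma E_Tz: "\<exists>f. uE * Tz z = Sc f * (Tz z * uE)"
proof (cases "0 \<le> z")
  case True
  have "uE * uT = Sc (\<lambda>q. inverse (q^2)) * (uT * uE)" using ET by (simp add: ci_def)
  then show ?thesis using True comm_pow_right by (simp add: Tz_def)
next
  case False
  have "uE * uTb = Sc (\<lambda>q. q^2) * (uTb * uE)" using ETb by (simp add: c2_def)
  then show ?thesis using False comm_pow_right by (simp add: Tz_def)
qed

lemma F_Tz: "\<exists>f. uF * Tz z = Sc f * (Tz z * uF)"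
proof (cases "0 \<le> z")
  case True
  have "uF * uT = Sc (\<lambda>q. q^2) * (uT * uF)" using FT by (simp add: c2_def)
  then show ?thesis using True comm_pow_right by (simp add: Tz_def)
next
  case False
  have "uF * uTb = Sc (\<lambda>q. inverse (q^2)) * (uTb * uF)" using FTb by (simp add: ci_def)
  then show ?thesis using False comm_pow_right by (simp add: Tz_def)
qed

lemma Ej_T: "\<exists>f. uE^n * uT = Sc f * (uT * uE^n)"
  using ET by (intro comm_pow_left) (simp add: ci_def)
lemma Ej_Tb: "\<exists>f. uE^n * uTb = Sc f * (uTb * uE^n)"
  using ETb by (intro comm_pow_left) (simp add: c2_def)

lemma F_E: "uF * uE = uE * uF - cs * uT + cs * uTb" by (rule FE)

lemma FEj: "uF * uE^Suc j \<in> ScSpan {uE^Suc j * uF, uT * uE^j, uTb * uE^j}"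
proof (induct j)
  case 0
  have "uF * uE^Suc 0 = Sc (\<lambda>q. 1) * (uE * uF) + (Sc (\<lambda>q. - inverse (q - inverse q)) * uT + (Sc (\<lambda>q. inverse (q - inverse q)) * uTb + 0))"
    by (simp add: F_E Sc_one cs_def Sc_neg)
  then show ?case by (rule ssubst) (intro ScSpan.ss_step ScSpan.ss_zero; simp)
next
  case (Suc j)
  have "uF * uE^Suc (Suc j) = (uF * uE^Suc j) * uE" by (simp add: mult.assoc power_Suc2[symmetric] del: power_Suc)
  also have "\<dots> \<in> ScSpan {uE^Suc (Suc j) * uF, uT * uE^Suc j, uTb * uE^Suc j}"
  proof (rule ss_right[OF Suc])
    fix a assume "a \<in> {uE^Suc j * uF, uT * uE^j, uTb * uE^j}"
    moreover have "uE^Suc j * uF * uE \<in> ScSpan {uE^Suc (Suc j) * uF, uT * uE^Suc j, uTb * uE^Suc j}"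
    proof -
      obtain f1 where f1: "uE^Suc j * uT = Sc f1 * (uT * uE^Suc j)" using Ej_T by blast
      obtain f2 where f2: "uE^Suc j * uTb = Sc f2 * (uTb * uE^Suc j)" using Ej_Tb by blast
      have "uE^Suc j * uF * uE = uE^Suc j * (uF * uE)" by (simp add: mult.assoc)
      also have "\<dots> = uE^Suc (Suc j) * uF - cs * (uE^Suc j * uT) + cs * (uE^Suc j * uTb)"
        by (simp add: F_E algebra_simps cs_left del: power_Suc) (simp add: mult.assoc[symmetric] power_Suc2 del: power_Suc)
      also have "\<dots> = uE^Suc (Suc j) * uF - cs * (Sc f1 * (uT * uE^Suc j)) + cs * (Sc f2 * (uTb * uE^Suc j))"
        by (simp add: f1 f2 del: power_Suc)
      finally have eq: "uE^Suc j * uF * uE = uE^Suc (Suc j) * uF - cs * (Sc f1 * (uT * uE^Suc j)) + cs * (Sc f2 * (uTb * uE^Suc j))" .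
      show ?thesis unfolding eq cs_def
        by (intro ss_add ss_diff ss_sc ss_base) auto
    qed
    moreover have "uT * uE^j * uE = uT * uE^Suc j" by (simp add: mult.assoc power_commutes)
    moreover have "uTb * uE^j * uE = uTb * uE^Suc j" by (simp add: mult.assoc power_commutes)
    ultimately show "a * uE \<in> ScSpan {uE^Suc (Suc j) * uF, uT * uE^Suc j, uTb * uE^Suc j}"
      by (auto intro: ss_base simp del: power_Suc)
  qed
  finally show ?case .
qed


definition W :: "bool \<times> int \<times> nat \<times> nat \<Rightarrow> uq" where
  "W m = (case m of (b, z, j, k) \<Rightarrow> gP b * Tz z * uE^j * uF^k)"

abbreviation "Span \<equiv> ScSpan (range W)"

lemma W_def': "W (b, z, j, k) = gP b * (Tz z * (uE^j * uF^k))"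
  by (simp add: W_def mult.assoc)

lemma W_in: "W m \<in> Span" by (rule ss_base) simp

lemma Tz_T': "Tz z * (uT * x) = Tz (z + 1) * x" by (simp add: mult.assoc[symmetric] Tz_T)
lemma Tz_Tb': "Tz z * (uTb * x) = Tz (z - 1) * x" by (simp add: mult.assoc[symmetric] Tz_Tb)

lemma gP_W: "gP c * W (b, z, j, k) \<in> Span"
proof (cases "c = b")
  case True
  then have "gP c * W (b, z, j, k) = W (b, z, j, k)"
    by (simp add: W_def' mult.assoc[symmetric] gP_gP)
  then show ?thesis by (simp add: W_in)
next
  case False
  then have "gP c * W (b, z, j, k) = 0"
    by (simp add: W_def' mult.assoc[symmetric] gP_gP)
  then show ?thesis by (simp add: ScSpan.ss_zero)
qed

lemma T_W: "uT * W (b, z, j, k) = W (b, z + 1, j, k)"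
proof -
  have "uT * W (b, z, j, k) = gP b * ((uT * Tz z) * (uE^j * uF^k))"
    by (simp add: W_def' mult.assoc[symmetric] gP_T)
  then show ?thesis by (simp add: T_Tz W_def')
qed

lemma Tb_W: "uTb * W (b, z, j, k) = W (b, z - 1, j, k)"
proof -
  have "uTb * W (b, z, j, k) = gP b * ((uTb * Tz z) * (uE^j * uF^k))"
    by (simp add: W_def' mult.assoc[symmetric] gP_Tb)
  then show ?thesis by (simp add: Tb_Tz W_def')
qed

lemma E_W: "uE * W (b, z, j, k) \<in> Span"
proof -
  obtain f where f: "uE * Tz z = Sc f * (Tz z * uE)" using E_Tz by blast
  have "uE * W (b, z, j, k) = gP (\<not> b) * ((uE * Tz z) * (uE^j * uF^k))"
    by (simp add: W_def' mult.assoc[symmetric] E_gP)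
  also have "\<dots> = Sc f * (gP (\<not> b) * (Tz z * (uE * uE^j * uF^k)))"
    by (simp add: f mult.assoc Sc_left[of "gP (\<not> b)"])
  also have "\<dots> = Sc f * W (\<not> b, z, Suc j, k)" by (simp add: W_def' mult.assoc)
  finally show ?thesis by (simp add: ss_sc W_in)
qed

lemma F_W: "uF * W (b, z, j, k) \<in> Span"
proof -
  obtain f where f: "uF * Tz z = Sc f * (Tz z * uF)" using F_Tz by blast
  have "uF * W (b, z, j, k) = gP (\<not> b) * ((uF * Tz z) * (uE^j * uF^k))"
    by (simp add: W_def' mult.assoc[symmetric] F_gP)
  also have "\<dots> = Sc f * (gP (\<not> b) * Tz z * ((uF * uE^j) * uF^k))"
    by (simp add: f mult.assoc Sc_left[of "gP (\<not> b)"])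
  finally have eq: "uF * W (b, z, j, k) = Sc f * (gP (\<not> b) * Tz z * ((uF * uE^j) * uF^k))" .
  have "gP (\<not> b) * Tz z * ((uF * uE^j) * uF^k) \<in> Span"
  proof (cases j)
    case 0
    then have "gP (\<not> b) * Tz z * ((uF * uE^j) * uF^k) = W (\<not> b, z, 0, Suc k)"
      by (simp add: W_def' mult.assoc)
    then show ?thesis by (simp add: W_in)
  next
    case (Suc j')
    let ?B = "{uE^Suc j' * uF * uF^k, uT * uE^j' * uF^k, uTb * uE^j' * uF^k}"
    have "(uF * uE^j) * uF^k \<in> ScSpan ?B"
      unfolding Suc by (rule ss_right[OF FEj]) (auto intro: ss_base simp del: power_Suc)
    then show ?thesis
    proof (rule ss_left)
      fix a assume "a \<in> ?B"
      moreover have "gP (\<not> b) * Tz z * (uE^Suc j' * uF * uF^k) = W (\<not> b, z, Suc j', Suc k)"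
        by (simp add: W_def' mult.assoc)
      moreover have "gP (\<not> b) * Tz z * (uT * uE^j' * uF^k) = W (\<not> b, z + 1, j', k)"
        by (simp add: W_def' mult.assoc Tz_T')
      moreover have "gP (\<not> b) * Tz z * (uTb * uE^j' * uF^k) = W (\<not> b, z - 1, j', k)"
        by (simp add: W_def' mult.assoc Tz_Tb')
      ultimately show "gP (\<not> b) * Tz z * a \<in> Span" by (auto simp: W_in simp del: power_Suc)
    qed
  qed
  then show ?thesis unfolding eq by (rule ss_sc)
qed

lemma gen_W: "a \<in> {gP True, gP False, uT, uTb, uE, uF} \<Longrightarrow> a * W m \<in> Span"
  by (cases m) (auto simp: gP_W T_W Tb_W E_W F_W W_in)

lemma gen_Span: "a \<in> {gP True, gP False, uT, uTb, uE, uF} \<Longrightarrow> x \<in> Span \<Longrightarrow> a * x \<in> Span"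
  by (rule ss_left[of x "range W"]) (auto intro: gen_W)

lemma G_Span: "x \<in> Span \<Longrightarrow> G g * x \<in> Span"
proof -
  assume x: "x \<in> Span"
  have K: "uK = gP True * uT" and Kb: "uKb = gP True * uTb" and L: "uL = gP False * uT"
    and Lb: "uLb = gP False * uTb" by (simp_all add: gP_def PT PTb QT QTb)
  show ?thesis
  proof (cases g)
    case GK then show ?thesis using x
      by (simp add: uK_def[symmetric] K mult.assoc gen_Span)
  next
    case GKb then show ?thesis using x
      by (simp add: uKb_def[symmetric] Kb mult.assoc gen_Span)
  next
    case GL then show ?thesis using x
      by (simp add: uL_def[symmetric] L mult.assoc gen_Span)
  next
    case GLb then show ?thesis using x
      by (simp add: uLb_def[symmetric] Lb mult.assoc gen_Span)
  next
    case GE then show ?thesis using x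
      by (simp add: uE_def[symmetric] gen_Span)
  next
    case GF then show ?thesis using x
      by (simp add: uF_def[symmetric] gen_Span)
  qed
qed

lemma one_Span: "1 \<in> Span"
proof -
  have "1 = W (True, 0, 0, 0) + W (False, 0, 0, 0)"
    by (simp add: W_def Tz0 gP_def PQ1)
  then show ?thesis by (metis ss_add W_in)
qed


definition dw :: "gen list \<Rightarrow> fa" where "dw w = (\<lambda>v. if v = w then 1 else 0)"

lemma dw_FA[simp]: "dw w \<in> FA"
  unfolding FA_def dw_def mem_Collect_eq by (rule finite_subset[of _ "{w}"]) auto

lemma dw_nil: "dw [] = fone" by (simp add: dw_def fone_def)

lemma dw_cons: "fmul (fgen g) (dw w) = dw (g # w)"
proof (rule fa_ext)
  fix v :: "gen list"
  show "fmul (fgen g) (dw w) v = dw (g # w) v"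
  proof (cases v)
    case Nil
    then show ?thesis by (simp add: fmul_def fgen_def dw_def)
  next
    case (Cons x v')
    have "fmul (fgen g) (dw w) v = (\<Sum>i\<le>Suc (length v'). fgen g (take i v) * dw w (drop i v))"
      by (simp add: fmul_def Cons)
    also have "\<dots> = (\<Sum>i\<le>length v'. fgen g (take (Suc i) v) * dw w (drop (Suc i) v))"
      by (subst sum.atMost_Suc_shift) (simp add: fgen_def Cons)
    also have "\<dots> = fgen g (take (Suc 0) v) * dw w (drop (Suc 0) v)"
    proof (subst sum.atMost_shift)
      have "\<And>i. i < length v' \<Longrightarrow> fgen g (take (Suc (Suc i)) v) = 0"
        by (cases v') (auto simp: fgen_def Cons)
      then show "fgen g (take (Suc 0) v) * dw w (drop (Suc 0) v) +
        (\<Sum>i<length v'. fgen g (take (Suc (Suc i)) v) * dw w (drop (Suc (Suc i)) v)) =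
        fgen g (take (Suc 0) v) * dw w (drop (Suc 0) v)" by simp
    qed
    also have "\<dots> = dw (g # w) v" by (simp add: fgen_def dw_def Cons)
    finally show ?thesis .
  qed
qed

primrec wordu :: "gen list \<Rightarrow> uq" where
  "wordu [] = 1"
| "wordu (g # w) = G g * wordu w"

lemma abs_dw: "abs_uq (\<lambda>q. dw w) = wordu w"
proof (induct w)
  case Nil then show ?case by (simp add: dw_nil one_uq.abs_eq)
next
  case (Cons g w)
  have "abs_uq (\<lambda>q. dw (g # w)) = abs_uq (\<lambda>q. fmul (fgen g) (dw w))" by (simp add: dw_cons)
  also have "\<dots> = G g * abs_uq (\<lambda>q. dw w)" by (subst abs_mul) (auto simp: G.abs_eq)
  finally show ?case using Cons by simp
qed

lemma wordu_Span: "wordu w \<in> Span"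
  by (induct w) (auto simp: one_Span G_Span)

lemma lincomb_insert: "finite J \<Longrightarrow> j \<notin> J \<Longrightarrow> lincomb c b (insert j J) = fadd (fsc (c j) (b j)) (lincomb c b J)"
  by (auto simp: lincomb_def fadd_def fsc_def)

lemma abs_lincomb: "finite J \<Longrightarrow> (\<And>j. j \<in> J \<Longrightarrow> b j \<in> FA) \<Longrightarrow>
  abs_uq (\<lambda>q. lincomb (\<lambda>j. c j q) b J) = (\<Sum>j\<in>J. Sc (c j) * abs_uq (\<lambda>q. b j))"
proof (induct J rule: finite_induct)
  case empty
  have "lincomb (\<lambda>j. c j q) b {} = fzero" for q by (simp add: lincomb_def fzero_def)
  then show ?case by (simp add: zero_uq.abs_eq)
next
  case (insert x F)
  have "abs_uq (\<lambda>q. lincomb (\<lambda>j. c j q) b (insert x F))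
      = abs_uq (\<lambda>q. fadd (fsc (c x q) (b x)) (lincomb (\<lambda>j. c j q) b F))"
    using insert by (simp add: lincomb_insert)
  also have "\<dots> = abs_uq (\<lambda>q. fsc (c x q) (b x)) + abs_uq (\<lambda>q. lincomb (\<lambda>j. c j q) b F)"
    using insert by (intro abs_add) auto
  also have "\<dots> = Sc (c x) * abs_uq (\<lambda>q. b x) + (\<Sum>j\<in>F. Sc (c j) * abs_uq (\<lambda>q. b j))"
    using insert by (simp add: abs_sc)
  finally show ?case using insert by simp
qed

lemma FA_decomp: "x \<in> FA \<Longrightarrow> lincomb x dw {w. x w \<noteq> 0} = x"
proof (rule fa_ext)
  fix w :: "gen list"
  assume "x \<in> FA"
  then have fin: "finite {w. x w \<noteq> 0}" by (simp add: FA_def)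
  show "lincomb x dw {w. x w \<noteq> 0} w = x w"
  proof (cases "x w = 0")
    case True
    then show ?thesis by (auto simp: lincomb_def dw_def intro!: sum.neutral)
  next
    case False
    have "lincomb x dw {w. x w \<noteq> 0} w = (\<Sum>v\<in>{w. x w \<noteq> 0}. if v = w then x v else 0)"
      by (auto simp: lincomb_def dw_def intro!: sum.cong)
    also have "\<dots> = x w" using False fin by (simp add: sum.delta')
    finally show ?thesis .
  qed
qed

lemma FA_Span: "x \<in> FA \<Longrightarrow> abs_uq (\<lambda>q. x) \<in> Span"
proof -
  assume x: "x \<in> FA"
  then have fin: "finite {w. x w \<noteq> 0}" by (simp add: FA_def)
  have "abs_uq (\<lambda>q. x) = abs_uq (\<lambda>q. lincomb (\<lambda>w. (\<lambda>q. x w) q) dw {w. x w \<noteq> 0})"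
    using FA_decomp[OF x] by simp
  also have "\<dots> = (\<Sum>w\<in>{w. x w \<noteq> 0}. Sc (\<lambda>q. x w) * wordu w)"
    using fin by (simp add: abs_lincomb abs_dw)
  finally have eq: "abs_uq (\<lambda>q. x) = (\<Sum>w\<in>{w. x w \<noteq> 0}. Sc (\<lambda>q. x w) * wordu w)" .
  have "\<And>S. finite S \<Longrightarrow> (\<Sum>w\<in>S. Sc (\<lambda>q. x w) * wordu w) \<in> Span"
  proof -
    fix S :: "gen list set" assume "finite S"
    then show "(\<Sum>w\<in>S. Sc (\<lambda>q. x w) * wordu w) \<in> Span"
      by (induct S rule: finite_induct) (auto intro: ss_add ss_sc wordu_Span ScSpan.ss_zero)
  qed
  then show ?thesis using eq fin by simp
qed

lemma Span_sum: "y \<in> ScSpan A \<Longrightarrow> \<exists>S c. finite S \<and> S \<subseteq> A \<and> y = (\<Sum>m\<in>S. Sc (c m) * m)"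
proof (induct y rule: ScSpan.induct)
  case ss_zero
  then show ?case by (rule_tac x="{}" in exI) simp
next
  case (ss_step a x f)
  then obtain S c where S: "finite S" "S \<subseteq> A" "x = (\<Sum>m\<in>S. Sc (c m) * m)" by blast
  show ?case
  proof (cases "a \<in> S")
    case True
    let ?c = "c(a := (\<lambda>q. f q + c a q))"
    have sumeq: "(\<Sum>m\<in>S - {a}. Sc (?c m) * m) = (\<Sum>m\<in>S - {a}. Sc (c m) * m)"
      by (rule sum.cong) auto
    have "Sc f * a + x = Sc f * a + (Sc (c a) * a + (\<Sum>m\<in>S - {a}. Sc (c m) * m))"
      using S True by (simp add: sum.remove)
    also have "\<dots> = Sc (?c a) * a + (\<Sum>m\<in>S - {a}. Sc (?c m) * m)"
      unfolding sumeq by (simp add: add.assoc[symmetric] distrib_right[symmetric] Sc_add)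
    also have "\<dots> = (\<Sum>m\<in>S. Sc (?c m) * m)"
      using S True by (simp only: sum.remove[of S a "\<lambda>m. Sc (?c m) * m"])
    finally show ?thesis using S True by blast
  next
    case False
    let ?c = "c(a := f)"
    have "Sc f * a + x = (\<Sum>m\<in>insert a S. Sc (?c m) * m)"
      using S False by (auto intro!: sum.cong)
    then show ?thesis using S ss_step False by blast
  qed
qed


type_synonym idx = "bool \<times> int \<times> nat \<times> nat"
type_synonym vec = "idx \<Rightarrow> complex"

definition sq :: "complex \<Rightarrow> complex" where "sq q = inverse (q - inverse q)"
definition alpha :: "complex \<Rightarrow> nat \<Rightarrow> complex" where
  "alpha q j = sq q * (\<Sum>a<j. q powi (- 2 * int a))"
definition beta :: "complex \<Rightarrow> nat \<Rightarrow> complex" where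
  "beta q j = sq q * (\<Sum>a<j. q powi (2 * int a))"

definition pz :: "complex \<Rightarrow> int \<Rightarrow> complex" where "pz q z = q powi (2 * z)"

fun opg :: "complex \<Rightarrow> gen \<Rightarrow> vec \<Rightarrow> vec" where
  "opg q GK v = (\<lambda>(b, z, j, k). if b then v (b, z - 1, j, k) else 0)"
| "opg q GKb v = (\<lambda>(b, z, j, k). if b then v (b, z + 1, j, k) else 0)"
| "opg q GL v = (\<lambda>(b, z, j, k). if b then 0 else v (b, z - 1, j, k))"
| "opg q GLb v = (\<lambda>(b, z, j, k). if b then 0 else v (b, z + 1, j, k))"
| "opg q GE v = (\<lambda>(b, z, j, k). if j = 0 then 0 else inverse (pz q z) * v (\<not> b, z, j - 1, k))"
| "opg q GF v = (\<lambda>(b, z, j, k). (if k = 0 then 0 else pz q z * v (\<not> b, z, j, k - 1))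
     - pz q (z - 1) * alpha q (Suc j) * v (\<not> b, z - 1, Suc j, k)
     + pz q (z + 1) * beta q (Suc j) * v (\<not> b, z + 1, Suc j, k))"

lemma opg_sum: "opg q g (\<lambda>m. \<Sum>i\<in>I. c i * f i m) = (\<lambda>m. \<Sum>i\<in>I. c i * opg q g (f i) m)"
  by (cases g) (simp_all add: fun_eq_iff split_def sum_distrib_left sum_subtractf sum.distrib
      distrib_left right_diff_distrib mult.left_commute)

primrec act :: "complex \<Rightarrow> gen list \<Rightarrow> vec \<Rightarrow> vec" where
  "act q [] v = v"
| "act q (g # w) v = opg q g (act q w v)"

lemma act_sum: "act q w (\<lambda>m. \<Sum>i\<in>I. c i * f i m) = (\<lambda>m. \<Sum>i\<in>I. c i * act q w (f i) m)"
  by (induct w) (simp_all add: opg_sum)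

lemma act_zero: "act q w (\<lambda>m. 0) = (\<lambda>m. 0)"
  using act_sum[where q=q and w=w and I="{}"] by simp

lemma act_append: "act q (u @ w) v = act q u (act q w v)"
  by (induct u) auto

definition Op :: "complex \<Rightarrow> fa \<Rightarrow> vec \<Rightarrow> vec" where
  "Op q x v = (\<lambda>m. \<Sum>w\<in>{w. x w \<noteq> 0}. x w * act q w v m)"

lemma Op_sup: "finite S \<Longrightarrow> {w. x w \<noteq> 0} \<subseteq> S \<Longrightarrow> Op q x v = (\<lambda>m. \<Sum>w\<in>S. x w * act q w v m)"
  unfolding Op_def by (auto simp: fun_eq_iff intro!: sum.mono_neutral_left)

lemma FA_fin: "x \<in> FA \<Longrightarrow> finite {w. x w \<noteq> 0}" by (simp add: FA_def)

lemma Op_fadd: "x \<in> FA \<Longrightarrow> y \<in> FA \<Longrightarrow> Op q (fadd x y) v = (\<lambda>m. Op q x v m + Op q y v m)"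
proof -
  assume x: "x \<in> FA" and y: "y \<in> FA"
  let ?S = "{w. x w \<noteq> 0} \<union> {w. y w \<noteq> 0}"
  have fin: "finite ?S" using x y by (simp add: FA_fin)
  have "Op q (fadd x y) v = (\<lambda>m. \<Sum>w\<in>?S. fadd x y w * act q w v m)"
    by (rule Op_sup[OF fin]) (auto simp: fadd_def)
  moreover have "Op q x v = (\<lambda>m. \<Sum>w\<in>?S. x w * act q w v m)" by (rule Op_sup[OF fin]) auto
  moreover have "Op q y v = (\<lambda>m. \<Sum>w\<in>?S. y w * act q w v m)" by (rule Op_sup[OF fin]) auto
  ultimately show ?thesis by (simp add: fadd_def distrib_right sum.distrib)
qed

lemma Op_fsub: "x \<in> FA \<Longrightarrow> y \<in> FA \<Longrightarrow> Op q (fsub x y) v = (\<lambda>m. Op q x v m - Op q y v m)"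
proof -
  assume x: "x \<in> FA" and y: "y \<in> FA"
  let ?S = "{w. x w \<noteq> 0} \<union> {w. y w \<noteq> 0}"
  have fin: "finite ?S" using x y by (simp add: FA_fin)
  have "Op q (fsub x y) v = (\<lambda>m. \<Sum>w\<in>?S. fsub x y w * act q w v m)"
    by (rule Op_sup[OF fin]) (auto simp: fsub_def)
  moreover have "Op q x v = (\<lambda>m. \<Sum>w\<in>?S. x w * act q w v m)" by (rule Op_sup[OF fin]) auto
  moreover have "Op q y v = (\<lambda>m. \<Sum>w\<in>?S. y w * act q w v m)" by (rule Op_sup[OF fin]) auto
  ultimately show ?thesis by (simp add: fsub_def left_diff_distrib sum_subtractf)
qed

lemma Op_fsc: "x \<in> FA \<Longrightarrow> Op q (fsc c x) v = (\<lambda>m. c * Op q x v m)"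
proof -
  assume x: "x \<in> FA"
  let ?S = "{w. x w \<noteq> 0}"
  have fin: "finite ?S" using x by (simp add: FA_fin)
  have "Op q (fsc c x) v = (\<lambda>m. \<Sum>w\<in>?S. fsc c x w * act q w v m)"
    by (rule Op_sup[OF fin]) (auto simp: fsc_def)
  then show ?thesis by (simp add: Op_def fsc_def sum_distrib_left mult.assoc)
qed

lemma Op_fzero: "Op q fzero v = (\<lambda>m. 0)" by (simp add: Op_def fzero_def)

lemma Op_fone: "Op q fone v = v"
proof -
  have "Op q fone v = (\<lambda>m. \<Sum>w\<in>{[]}. fone w * act q w v m)" by (rule Op_sup) (auto simp: fone_def)
  then show ?thesis by (simp add: fone_def)
qed

lemma Op_fgen: "Op q (fgen g) v = opg q g v"
proof -
  have "Op q (fgen g) v = (\<lambda>m. \<Sum>w\<in>{[g]}. fgen g w * act q w v m)" by (rule Op_sup) (auto simp: fgen_def)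
  then show ?thesis by (simp add: fgen_def)
qed

lemma Op_fmul: "x \<in> FA \<Longrightarrow> y \<in> FA \<Longrightarrow> Op q (fmul x y) v = Op q x (Op q y v)"
proof -
  assume x: "x \<in> FA" and y: "y \<in> FA"
  let ?Sx = "{w. x w \<noteq> 0}" and ?Sy = "{w. y w \<noteq> 0}"
  have fx: "finite ?Sx" and fy: "finite ?Sy" using x y by (simp_all add: FA_fin)
  let ?S3 = "(\<lambda>(u, w). u @ w) ` (?Sx \<times> ?Sy)"
  have f3: "finite ?S3" using fx fy by simp
  define g where "g = (\<lambda>(u, w) m. x u * y w * act q (u @ w) v m)"
  let ?Sig = "Sigma ?S3 (\<lambda>z. {..length z})"
  let ?phi = "\<lambda>(z, i). (take i (z::gen list), drop i z)"
  have finSig: "finite ?Sig" using f3 by auto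
  have injphi: "inj_on ?phi ?Sig"
  proof (rule inj_onI)
    fix a b assume a: "a \<in> ?Sig" and b: "b \<in> ?Sig" and e: "?phi a = ?phi b"
    obtain z1 i1 where a': "a = (z1, i1)" by (cases a)
    obtain z2 i2 where b': "b = (z2, i2)" by (cases b)
    have t: "take i1 z1 = take i2 z2" and d: "drop i1 z1 = drop i2 z2" using e a' b' by auto
    have "z1 = take i1 z1 @ drop i1 z1" by simp
    also have "\<dots> = take i2 z2 @ drop i2 z2" by (simp only: t d)
    also have "\<dots> = z2" by simp
    finally have z: "z1 = z2" .
    have "i1 \<le> length z1" "i2 \<le> length z2" using a b a' b' by auto
    then have "i1 = i2" using arg_cong[OF t, of length] z by simp
    then show "a = b" using a' b' z by simp
  qed
  have sub: "?Sx \<times> ?Sy \<subseteq> ?phi ` ?Sig"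
  proof (rule subsetI)
    fix p assume p: "p \<in> ?Sx \<times> ?Sy"
    obtain u w where uw: "p = (u, w)" by (cases p)
    have uS: "u @ w \<in> ?S3"
    proof (rule image_eqI[of _ _ "(u, w)"])
      show "u @ w = (\<lambda>(u, w). u @ w) (u, w)" by simp
      show "(u, w) \<in> ?Sx \<times> ?Sy" using p uw by simp
    qed
    have mem: "(u @ w, length u) \<in> ?Sig"
      by (rule SigmaI[OF uS]) simp
    have "p = ?phi (u @ w, length u)" using uw by simp
    then show "p \<in> ?phi ` ?Sig" using mem by (rule image_eqI)
  qed
  show ?thesis
  proof (rule ext)
    fix m
    define h where "h = (\<lambda>p. g p m)"
    have s1: "Op q (fmul x y) v m = (\<Sum>z\<in>?S3. fmul x y z * act q z v m)"
      by (simp only: Op_sup[OF f3 fmul_supp])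
    have s2: "(\<Sum>z\<in>?S3. fmul x y z * act q z v m) = (\<Sum>z\<in>?S3. \<Sum>i\<in>{..length z}. h (take i z, drop i z))"
      by (rule sum.cong[OF refl]) (simp add: fmul_def h_def g_def sum_distrib_right)
    have s3: "(\<Sum>z\<in>?S3. \<Sum>i\<in>{..length z}. h (take i z, drop i z)) = (\<Sum>(z, i)\<in>?Sig. h (take i z, drop i z))"
      by (rule sum.Sigma[OF f3]) simp
    have s4: "(\<Sum>(z, i)\<in>?Sig. h (take i z, drop i z)) = (\<Sum>p\<in>?phi ` ?Sig. h p)"
      by (simp only: sum.reindex[OF injphi]) (rule sum.cong, auto)
    have zero: "\<forall>p\<in>?phi ` ?Sig - ?Sx \<times> ?Sy. h p = 0"
    proof
      fix p assume "p \<in> ?phi ` ?Sig - ?Sx \<times> ?Sy"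
      then have np: "p \<notin> ?Sx \<times> ?Sy" by blast
      obtain u w where uw: "p = (u, w)" by (cases p)
      have "x u = 0 \<or> y w = 0" using np uw by auto
      then show "h p = 0" using uw by (auto simp: h_def g_def)
    qed
    have s5: "(\<Sum>p\<in>?phi ` ?Sig. h p) = (\<Sum>p\<in>?Sx \<times> ?Sy. h p)"
      by (rule sum.mono_neutral_right[OF finite_imageI[OF finSig] sub zero])
    have s6: "(\<Sum>p\<in>?Sx \<times> ?Sy. h p) = (\<Sum>u\<in>?Sx. \<Sum>w\<in>?Sy. h (u, w))"
      by (subst sum.cartesian_product) (rule sum.cong, auto)
    have s7: "(\<Sum>u\<in>?Sx. \<Sum>w\<in>?Sy. h (u, w)) = Op q x (Op q y v) m"
      by (simp add: Op_def h_def g_def act_sum act_append sum_distrib_left mult.assoc)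
    show "Op q (fmul x y) v m = Op q x (Op q y v) m"
      unfolding s1 s2 s3 s4 s5 s6 s7 ..
  qed
qed

lemma Op_zero_vec: "Op q x (\<lambda>m. 0) = (\<lambda>m. 0)"
  by (simp add: Op_def act_zero)

lemma rels_FA: "r \<in> rels q \<Longrightarrow> r \<in> FA"
  by (auto simp: rels_def)

lemma ideal_FA: "x \<in> ideal_gen R \<Longrightarrow> R \<subseteq> FA \<Longrightarrow> x \<in> FA"
  by (induct x rule: ideal_gen.induct) auto

lemma Op_ideal:
  assumes rel: "\<And>r v. r \<in> rels q \<Longrightarrow> Op q r v = (\<lambda>m. 0)"
  shows "x \<in> ideal_gen (rels q) \<Longrightarrow> Op q x v = (\<lambda>m. 0)"
proof (induct x arbitrary: v rule: ideal_gen.induct)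
  case zero then show ?case by (simp add: Op_fzero)
next
  case (gen r a b)
  then have "r \<in> FA" by (simp add: rels_FA)
  then show ?case using gen by (simp add: Op_fmul rel Op_zero_vec)
next
  case (add x y)
  have "x \<in> FA" "y \<in> FA" using add by (auto intro: ideal_FA rels_FA)
  then show ?case using add by (simp add: Op_fadd)
next
  case (scale x c)
  have "x \<in> FA" using scale by (auto intro: ideal_FA rels_FA)
  then show ?case using scale by (simp add: Op_fsc)
qed


lemma Op2: "Op q (fmul (fgen a) (fgen b)) v = opg q a (opg q b v)"
  by (simp add: Op_fmul Op_fgen)
lemma Op3: "Op q (fmul3 (fgen a) (fgen b) (fgen c)) v = opg q a (opg q b (opg q c v))"
  by (simp add: Op_fmul Op_fgen)

lemma zeroI: "(\<And>b z j k. f (b, z, j, k) = (0::complex)) \<Longrightarrow> f = (\<lambda>m. 0)"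
  by (auto simp: fun_eq_iff)

lemma rel1: "Op q (fsub (fmul3 gK gKb gK) gK) v = (\<lambda>m. 0)"
  by (rule zeroI) (simp add: Op_fsub Op3 Op_fgen)
lemma rel2: "Op q (fsub (fmul3 gKb gK gKb) gKb) v = (\<lambda>m. 0)"
  by (rule zeroI) (simp add: Op_fsub Op3 Op_fgen)
lemma rel3: "Op q (fsub (fmul gK gKb) (fmul gKb gK)) v = (\<lambda>m. 0)"
  by (rule zeroI) (simp add: Op_fsub Op2)
lemma rel4: "Op q (fsub (fmul3 gL gLb gL) gL) v = (\<lambda>m. 0)"
  by (rule zeroI) (simp add: Op_fsub Op3 Op_fgen)
lemma rel5: "Op q (fsub (fmul3 gLb gL gLb) gLb) v = (\<lambda>m. 0)"
  by (rule zeroI) (simp add: Op_fsub Op3 Op_fgen)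
lemma rel6: "Op q (fsub (fmul gL gLb) (fmul gLb gL)) v = (\<lambda>m. 0)"
  by (rule zeroI) (simp add: Op_fsub Op2)
lemma rel7: "Op q (fsub (fadd (fmul gK gKb) (fmul gL gLb)) fone) v = (\<lambda>m. 0)"
  by (rule zeroI) (simp add: Op_fsub Op_fadd Op2 Op_fone)

lemma pz_nz: "q \<noteq> 0 \<Longrightarrow> pz q z \<noteq> 0" by (simp add: pz_def)
lemma pz_p1: "q \<noteq> 0 \<Longrightarrow> pz q (z + 1) = q^2 * pz q z"
  unfolding pz_def by (simp add: distrib_left power_int_add)
lemma pz_m1: "q \<noteq> 0 \<Longrightarrow> pz q (z - 1) = pz q z / q^2"
  unfolding pz_def by (simp add: right_diff_distrib power_int_diff)
lemma pz_m2: "q \<noteq> 0 \<Longrightarrow> pz q (z - 2) = pz q z / q^2 / q^2"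
  unfolding pz_def by (simp add: right_diff_distrib power_int_diff power_int_numeral field_simps)
lemma pz_p2: "q \<noteq> 0 \<Longrightarrow> pz q (z + 2) = q^2 * (q^2 * pz q z)"
  unfolding pz_def by (simp add: distrib_left power_int_add power_int_numeral field_simps)

lemmas pzs = pz_p1 pz_m1 pz_m2 pz_p2

lemma rel8: "q \<noteq> 0 \<Longrightarrow> Op q (fsub (fmul gK gE) (fsc (q^2) (fmul gE gL))) v = (\<lambda>m. 0)"
  by (rule zeroI) (simp add: Op_fsub Op_fsc Op2 pzs pz_nz field_simps)
lemma rel9: "q \<noteq> 0 \<Longrightarrow> Op q (fsub (fmul gL gE) (fsc (q^2) (fmul gE gK))) v = (\<lambda>m. 0)"
  by (rule zeroI) (simp add: Op_fsub Op_fsc Op2 pzs pz_nz field_simps)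
lemma rel10: "q \<noteq> 0 \<Longrightarrow> Op q (fsub (fmul gKb gE) (fsc (inverse (q^2)) (fmul gE gLb))) v = (\<lambda>m. 0)"
  by (rule zeroI) (simp add: Op_fsub Op_fsc Op2 pzs pz_nz field_simps)
lemma rel11: "q \<noteq> 0 \<Longrightarrow> Op q (fsub (fmul gLb gE) (fsc (inverse (q^2)) (fmul gE gKb))) v = (\<lambda>m. 0)"
  by (rule zeroI) (simp add: Op_fsub Op_fsc Op2 pzs pz_nz field_simps)
lemma rel12: "q \<noteq> 0 \<Longrightarrow> Op q (fsub (fmul gK gF) (fsc (inverse (q^2)) (fmul gF gL))) v = (\<lambda>m. 0)"
  by (rule zeroI) (simp add: Op_fsub Op_fsc Op2 pzs pz_nz field_simps)
lemma rel13: "q \<noteq> 0 \<Longrightarrow> Op q (fsub (fmul gL gF) (fsc (inverse (q^2)) (fmul gF gK))) v = (\<lambda>m. 0)"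
  by (rule zeroI) (simp add: Op_fsub Op_fsc Op2 pzs pz_nz field_simps)
lemma rel14: "q \<noteq> 0 \<Longrightarrow> Op q (fsub (fmul gKb gF) (fsc (q^2) (fmul gF gLb))) v = (\<lambda>m. 0)"
  by (rule zeroI) (simp add: Op_fsub Op_fsc Op2 pzs pz_nz field_simps)
lemma rel15: "q \<noteq> 0 \<Longrightarrow> Op q (fsub (fmul gLb gF) (fsc (q^2) (fmul gF gKb))) v = (\<lambda>m. 0)"
  by (rule zeroI) (simp add: Op_fsub Op_fsc Op2 pzs pz_nz field_simps)


lemma alpha_Suc: "q \<noteq> 0 \<Longrightarrow> alpha q (Suc j) = sq q + alpha q j / q^2"
proof -
  assume q: "q \<noteq> 0"
  have "alpha q (Suc j) = sq q * (q powi 0 + (\<Sum>a<j. q powi (- 2 * int (Suc a))))"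
    unfolding alpha_def by (subst sum.lessThan_Suc_shift) simp
  also have "(\<Sum>a<j. q powi (- 2 * int (Suc a))) = (\<Sum>a<j. q powi (- 2 * int a)) / q^2"
  proof -
    have t: "q powi (- 2 * int (Suc a)) = q powi (- 2 * int a) / q^2" for a
    proof -
      have e: "- 2 * int (Suc a) = - 2 * int a + (- 2)" by simp
      have "q powi (- 2 * int (Suc a)) = q powi (- 2 * int a) * q powi (- 2)"
        unfolding e using q by (rule power_int_add[OF disjI1])
      also have "q powi (- 2) = inverse (q^2)" by (simp add: power_int_minus)
      finally show ?thesis by (simp add: divide_inverse)
    qed
    show ?thesis unfolding t by (rule sum_divide_distrib[symmetric])
  qed
  finally show ?thesis by (simp add: alpha_def distrib_left)
qed

lemma beta_Suc: "q \<noteq> 0 \<Longrightarrow> beta q (Suc j) = sq q + q^2 * beta q j"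
proof -
  assume q: "q \<noteq> 0"
  have "beta q (Suc j) = sq q * (q powi 0 + (\<Sum>a<j. q powi (2 * int (Suc a))))"
    unfolding beta_def by (subst sum.lessThan_Suc_shift) simp
  also have "(\<Sum>a<j. q powi (2 * int (Suc a))) = q^2 * (\<Sum>a<j. q powi (2 * int a))"
    by (simp add: sum_distrib_left distrib_left power_int_add q field_simps)
  finally show ?thesis by (simp add: beta_def algebra_simps)
qed

lemma alpha0: "alpha q 0 = 0" and beta0: "beta q 0 = 0" by (simp_all add: alpha_def beta_def)

lemma sq_fold: "inverse (q - inverse q) = sq q" by (simp add: sq_def)

lemma rel16: "q \<noteq> 0 \<Longrightarrow> Op q (fsub (fsub (fmul gE gF) (fmul gF gE))
          (fsc (inverse (q - inverse q)) (fsub (fadd gK gL) (fadd gKb gLb)))) v = (\<lambda>m. 0)"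
  apply (rule zeroI)
  apply (simp add: Op_fsub Op_fsc Op2 Op_fadd Op_fgen sq_fold)
  apply (simp add: pzs pz_nz alpha_Suc beta_Suc alpha0 beta0 field_simps)
  done


lemma abs_fpow: "x \<in> FA \<Longrightarrow> abs_uq (\<lambda>q. fpow x n) = abs_uq (\<lambda>q. x) ^ n"
proof (induct n)
  case 0 then show ?case by (simp add: one_uq.abs_eq)
next
  case (Suc n)
  then have "abs_uq (\<lambda>q. fpow x (Suc n)) = abs_uq (\<lambda>q. x) * abs_uq (\<lambda>q. fpow x n)"
    by (simp add: abs_mul)
  then show ?case using Suc by simp
qed

lemma abs_cmul: "x \<in> FA \<Longrightarrow> y \<in> FA \<Longrightarrow> abs_uq (\<lambda>q. fmul x y) = abs_uq (\<lambda>q. x) * abs_uq (\<lambda>q. y)"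
  by (rule abs_mul)

lemma Pe_FA[simp]: "Pe \<in> FA" and Qe_FA[simp]: "Qe \<in> FA" by (simp_all add: Pe_def Qe_def)

lemma abs_gens: "abs_uq (\<lambda>q. gK) = uK" "abs_uq (\<lambda>q. gKb) = uKb" "abs_uq (\<lambda>q. gL) = uL"
  "abs_uq (\<lambda>q. gLb) = uLb" "abs_uq (\<lambda>q. gE) = uE" "abs_uq (\<lambda>q. gF) = uF"
  by (simp_all add: gdefs G.abs_eq)

lemma abs_Pe: "abs_uq (\<lambda>q. Pe) = uP" and abs_Qe: "abs_uq (\<lambda>q. Qe) = uQ"
  by (simp_all add: Pe_def Qe_def uP_def uQ_def abs_cmul abs_gens)

lemma Kpow: "uK ^ Suc n = uP * uT ^ Suc n"
proof (induct n)
  case 0 then show ?case by (simp add: PT)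
next
  case (Suc n)
  have "uK ^ Suc (Suc n) = uK * (uP * uT ^ Suc n)" using Suc by simp
  also have "\<dots> = uP * uT ^ Suc (Suc n)"
    by (simp only: mult.assoc[symmetric] KP) (simp add: PT[symmetric] mult.assoc)
  finally show ?case .
qed

lemma Kbpow: "uKb ^ Suc n = uP * uTb ^ Suc n"
proof (induct n)
  case 0 then show ?case by (simp add: PTb)
next
  case (Suc n)
  have "uKb ^ Suc (Suc n) = uKb * (uP * uTb ^ Suc n)" using Suc by simp
  also have "\<dots> = uP * uTb ^ Suc (Suc n)"
    by (simp only: mult.assoc[symmetric] KbP) (simp add: PTb[symmetric] mult.assoc)
  finally show ?case .
qed

lemma Lpow: "uL ^ Suc n = uQ * uT ^ Suc n"
proof (induct n)
  case 0 then show ?case by (simp add: QT)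
next
  case (Suc n)
  have "uL ^ Suc (Suc n) = uL * (uQ * uT ^ Suc n)" using Suc by simp
  also have "\<dots> = uQ * uT ^ Suc (Suc n)"
    by (simp only: mult.assoc[symmetric] LQ) (simp add: QT[symmetric] mult.assoc)
  finally show ?case .
qed

lemma Lbpow: "uLb ^ Suc n = uQ * uTb ^ Suc n"
proof (induct n)
  case 0 then show ?case by (simp add: QTb)
next
  case (Suc n)
  have "uLb ^ Suc (Suc n) = uLb * (uQ * uTb ^ Suc n)" using Suc by simp
  also have "\<dots> = uQ * uTb ^ Suc (Suc n)"
    by (simp only: mult.assoc[symmetric] LbQ) (simp add: QTb[symmetric] mult.assoc)
  finally show ?case .
qed

lemma PKpow: "uP * uK ^ n = uP * uT ^ n"
  by (cases n) (simp_all only: Kpow mult.assoc[symmetric] PP power_0)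
lemma QLpow: "uQ * uL ^ n = uQ * uT ^ n"
  by (cases n) (simp_all only: Lpow mult.assoc[symmetric] QQ power_0)

definition Bfa :: "bool \<times> int \<times> nat \<times> nat \<Rightarrow> fa" where
  "Bfa m = (case m of (b, z, j, k) \<Rightarrow>
     if b then (if 0 \<le> z then fam Pe gK gKb (Inl (nat z, j, k)) else fam Pe gK gKb (Inr (nat (-z), j, k)))
     else (if 0 \<le> z then fam Qe gL gLb (Inl (nat z, j, k)) else fam Qe gL gLb (Inr (nat (-z), j, k))))"

lemma fam_FA[simp]: "X \<in> FA \<Longrightarrow> A \<in> FA \<Longrightarrow> Ab \<in> FA \<Longrightarrow> fam X A Ab x \<in> FA"
  by (auto simp: fam_def split: sum.split prod.split)

lemma Bfa_FA[simp]: "Bfa m \<in> FA"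
  by (auto simp: Bfa_def split: prod.split)

lemma abs_famP: "abs_uq (\<lambda>q. fam Pe gK gKb (Inl (i, j, k))) = uP * uK^i * uE^j * uF^k"
  "abs_uq (\<lambda>q. fam Pe gK gKb (Inr (i, j, k))) = uKb^i * uE^j * uF^k"
  "abs_uq (\<lambda>q. fam Qe gL gLb (Inl (i, j, k))) = uQ * uL^i * uE^j * uF^k"
  "abs_uq (\<lambda>q. fam Qe gL gLb (Inr (i, j, k))) = uLb^i * uE^j * uF^k"
  by (simp_all add: fam_def abs_cmul abs_fpow abs_gens abs_Pe abs_Qe)

lemma abs_Bfa: "abs_uq (\<lambda>q. Bfa m) = W m"
proof -
  obtain b z j k where m: "m = (b, z, j, k)" by (cases m) auto
  show ?thesis
  proof (cases b)
    case True
    show ?thesis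
    proof (cases "0 \<le> z")
      case True
      then show ?thesis using \<open>b\<close> m
        by (simp add: Bfa_def W_def abs_famP PKpow gP_def Tz_def)
    next
      case False
      then obtain n where n: "nat (-z) = Suc n" by (cases "nat (-z)") auto
      then show ?thesis using \<open>b\<close> m False
        by (simp add: Bfa_def W_def abs_famP gP_def Tz_def Kbpow del: power_Suc)
    qed
  next
    case False
    show ?thesis
    proof (cases "0 \<le> z")
      case True
      then show ?thesis using \<open>\<not> b\<close> m
        by (simp add: Bfa_def W_def abs_famP QLpow gP_def Tz_def)
    next
      case False
      then obtain n where n: "nat (-z) = Suc n" by (cases "nat (-z)") auto
      then show ?thesis using \<open>\<not> b\<close> m False
        by (simp add: Bfa_def W_def abs_famP gP_def Tz_def Lbpow del: power_Suc)
    qed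
  qed
qed

definition rt :: "bool \<times> int \<times> nat \<times> nat \<Rightarrow> bool" where
  "rt m = (case m of (b, z, j, k) \<Rightarrow> if even (j + k) then b else \<not> b)"

lemma Fpow_gP: "uF^k * gP c = gP (if even k then c else \<not> c) * uF^k"
proof (induct k arbitrary: c)
  case 0 then show ?case by simp
next
  case (Suc k)
  have "uF^Suc k * gP c = uF * (uF^k * gP c)" by (simp add: mult.assoc)
  also have "\<dots> = gP (if even (Suc k) then c else \<not> c) * uF^Suc k"
    by (simp add: Suc mult.assoc[symmetric] F_gP)
  finally show ?case .
qed

lemma Epow_gP: "uE^k * gP c = gP (if even k then c else \<not> c) * uE^k"
proof (induct k arbitrary: c)
  case 0 then show ?case by simp
next
  case (Suc k)
  have "uE^Suc k * gP c = uE * (uE^k * gP c)" by (simp add: mult.assoc)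
  also have "\<dots> = gP (if even (Suc k) then c else \<not> c) * uE^Suc k"
    by (simp add: Suc mult.assoc[symmetric] E_gP)
  finally show ?case .
qed

lemma W_gP: "W m * gP c = (if rt m = c then W m else 0)"
proof -
  obtain b z j k where m: "m = (b, z, j, k)" by (cases m) auto
  let ?c1 = "if even k then c else \<not> c"
  let ?c2 = "if even j then ?c1 else \<not> ?c1"
  have "W m * gP c = gP b * Tz z * uE^j * (uF^k * gP c)" by (simp add: m W_def mult.assoc)
  also have "\<dots> = gP b * Tz z * (uE^j * gP ?c1) * uF^k" by (simp add: Fpow_gP mult.assoc)
  also have "\<dots> = gP b * (Tz z * gP ?c2) * uE^j * uF^k" by (simp add: Epow_gP mult.assoc)
  also have "\<dots> = (gP b * gP ?c2) * Tz z * uE^j * uF^k" by (simp add: gP_Tz[symmetric] mult.assoc)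
  also have "\<dots> = (if rt m = c then W m else 0)"
    by (auto simp: gP_gP m rt_def W_def)
  finally show ?thesis .
qed

lemma gP_W': "gP c * W m = (if fst m = c then W m else 0)"
  by (cases m) (auto simp: W_def mult.assoc[symmetric] gP_gP)

lemma corner_sum: "finite S \<Longrightarrow> gP a * (\<Sum>m\<in>S. Sc (f m) * W m) * gP c
   = (\<Sum>m\<in>{m\<in>S. fst m = a \<and> rt m = c}. Sc (f m) * W m)"
proof -
  assume S: "finite S"
  have "gP a * (\<Sum>m\<in>S. Sc (f m) * W m) * gP c = (\<Sum>m\<in>S. Sc (f m) * (gP a * W m * gP c))"
    by (simp add: sum_distrib_left sum_distrib_right Sc_left mult.assoc)
  also have "\<dots> = (\<Sum>m\<in>S. if fst m = a \<and> rt m = c then Sc (f m) * W m else 0)"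
    by (rule sum.cong) (auto simp: gP_W' W_gP)
  also have "\<dots> = (\<Sum>m\<in>{m\<in>S. fst m = a \<and> rt m = c}. Sc (f m) * W m)"
    using S by (simp add: sum.inter_filter)
  finally show ?thesis .
qed


lemma Op_rels: assumes q: "q \<noteq> 0" shows "r \<in> rels q \<Longrightarrow> Op q r v = (\<lambda>m. 0)"
  unfolding rels_def
  by (auto simp only: insert_iff empty_iff rel1 rel2 rel3 rel4 rel5 rel6 rel7 rel8[OF q] rel9[OF q]
      rel10[OF q] rel11[OF q] rel12[OF q] rel13[OF q] rel14[OF q] rel15[OF q] rel16[OF q])

lemma eqU_Op: "q \<noteq> 0 \<Longrightarrow> eqU q x y \<Longrightarrow> x \<in> FA \<Longrightarrow> y \<in> FA \<Longrightarrow> Op q x v = Op q y v"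
proof -
  assume q: "q \<noteq> 0" and e: "eqU q x y" and x: "x \<in> FA" and y: "y \<in> FA"
  have R: "\<And>r v. r \<in> rels q \<Longrightarrow> Op q r v = (\<lambda>m. 0)" using Op_rels[OF q] by blast
  have "fsub x y \<in> ideal_gen (rels q)" using e by (simp add: eqU_def)
  then have "Op q (fsub x y) v = (\<lambda>m. 0)" using Op_ideal[OF R] by blast
  then show ?thesis using x y by (simp add: Op_fsub fun_eq_iff)
qed

lemma Op_fgen': "Op q (fgen g) = opg q g" by (rule ext) (simp add: Op_fgen)

lemma Op_fpow: "x \<in> FA \<Longrightarrow> Op q (fpow x n) v = (Op q x ^^ n) v"
  by (induct n arbitrary: v) (simp_all add: Op_fone Op_fmul)

definition e0 :: vec where "e0 = (\<lambda>(b, z, j, k). if z = 0 \<and> j = 0 \<and> k = 0 then 1 else 0)"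
definition w0 :: "nat \<Rightarrow> nat \<Rightarrow> vec" where
  "w0 j k = (\<lambda>(b, z, j', k'). if z = 0 \<and> j' = j \<and> k' = k then 1 else 0)"

lemma pz0: "pz q 0 = 1" by (simp add: pz_def)

lemma Fpow_e0: "(opg q GF ^^ k) e0 = w0 0 k"
proof (induct k)
  case 0 then show ?case by (simp add: e0_def w0_def)
next
  case (Suc k)
  then show ?case by (auto simp: w0_def fun_eq_iff pz0)
qed

lemma Epow_w0: "(opg q GE ^^ j) (w0 0 k) = w0 j k"
proof (induct j)
  case 0 then show ?case by simp
next
  case (Suc j)
  then show ?case by (auto simp: w0_def fun_eq_iff pz0)
qed

lemma Kpow_w0: "(opg q GK ^^ Suc i) (w0 j k) = (\<lambda>(b, z, j', k'). if b \<and> z = int (Suc i) \<and> j' = j \<and> k' = k then 1 else 0)"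
  by (induct i) (auto simp: w0_def fun_eq_iff)
lemma Kbpow_w0: "(opg q GKb ^^ Suc i) (w0 j k) = (\<lambda>(b, z, j', k'). if b \<and> z = - int (Suc i) \<and> j' = j \<and> k' = k then 1 else 0)"
  by (induct i) (auto simp: w0_def fun_eq_iff)
lemma Lpow_w0: "(opg q GL ^^ Suc i) (w0 j k) = (\<lambda>(b, z, j', k'). if \<not> b \<and> z = int (Suc i) \<and> j' = j \<and> k' = k then 1 else 0)"
  by (induct i) (auto simp: w0_def fun_eq_iff)
lemma Lbpow_w0: "(opg q GLb ^^ Suc i) (w0 j k) = (\<lambda>(b, z, j', k'). if \<not> b \<and> z = - int (Suc i) \<and> j' = j \<and> k' = k then 1 else 0)"
  by (induct i) (auto simp: w0_def fun_eq_iff)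

lemma Kpow_w0': "0 < i \<Longrightarrow> (opg q GK ^^ i) (w0 j k) = (\<lambda>(b, z, j', k'). if b \<and> z = int i \<and> j' = j \<and> k' = k then 1 else 0)"
  using Kpow_w0[where i="i - 1" and q=q and j=j and k=k] by simp
lemma Kbpow_w0': "0 < i \<Longrightarrow> (opg q GKb ^^ i) (w0 j k) = (\<lambda>(b, z, j', k'). if b \<and> z = - int i \<and> j' = j \<and> k' = k then 1 else 0)"
  using Kbpow_w0[where i="i - 1" and q=q and j=j and k=k] by simp
lemma Lpow_w0': "0 < i \<Longrightarrow> (opg q GL ^^ i) (w0 j k) = (\<lambda>(b, z, j', k'). if \<not> b \<and> z = int i \<and> j' = j \<and> k' = k then 1 else 0)"
  using Lpow_w0[where i="i - 1" and q=q and j=j and k=k] by simp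
lemma Lbpow_w0': "0 < i \<Longrightarrow> (opg q GLb ^^ i) (w0 j k) = (\<lambda>(b, z, j', k'). if \<not> b \<and> z = - int i \<and> j' = j \<and> k' = k then 1 else 0)"
  using Lbpow_w0[where i="i - 1" and q=q and j=j and k=k] by simp

definition delta :: "idx \<Rightarrow> vec" where "delta m = (\<lambda>m'. if m' = m then 1 else 0)"

lemma Op_Pe: "Op q Pe v = opg q GK (opg q GKb v)" by (simp add: Pe_def Op2)
lemma Op_Qe: "Op q Qe v = opg q GL (opg q GLb v)" by (simp add: Qe_def Op2)

lemma Op_famPl: "Op q (fam Pe gK gKb (Inl (i, j, k))) e0 = delta (True, int i, j, k)"
proof (cases "i = 0")
  case True
  then show ?thesis
    by (simp add: fam_def Op_fmul Op_fpow Op_fgen' Op_Pe Fpow_e0 Epow_w0)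
       (auto simp: w0_def delta_def fun_eq_iff)
next
  case False
  then show ?thesis
    by (simp add: fam_def Op_fmul Op_fpow Op_fgen' Op_Pe Fpow_e0 Epow_w0 Kpow_w0')
       (auto simp: delta_def fun_eq_iff)
qed


lemma Op_famPr: "0 < i \<Longrightarrow> Op q (fam Pe gK gKb (Inr (i, j, k))) e0 = delta (True, - int i, j, k)"
  by (simp add: fam_def Op_fmul Op_fpow Op_fgen' Fpow_e0 Epow_w0 Kbpow_w0') (auto simp: delta_def fun_eq_iff)

lemma Op_famQl: "Op q (fam Qe gL gLb (Inl (i, j, k))) e0 = delta (False, int i, j, k)"
proof (cases "i = 0")
  case True
  then show ?thesis
    by (simp add: fam_def Op_fmul Op_fpow Op_fgen' Op_Qe Fpow_e0 Epow_w0)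
       (auto simp: w0_def delta_def fun_eq_iff)
next
  case False
  then show ?thesis
    by (simp add: fam_def Op_fmul Op_fpow Op_fgen' Op_Qe Fpow_e0 Epow_w0 Lpow_w0')
       (auto simp: delta_def fun_eq_iff)
qed

lemma Op_famQr: "0 < i \<Longrightarrow> Op q (fam Qe gL gLb (Inr (i, j, k))) e0 = delta (False, - int i, j, k)"
  by (simp add: fam_def Op_fmul Op_fpow Op_fgen' Fpow_e0 Epow_w0 Lbpow_w0') (auto simp: delta_def fun_eq_iff)

lemma Op_Bfa: "Op q (Bfa m) e0 = delta m"
proof -
  obtain b z j k where m: "m = (b, z, j, k)" by (cases m) auto
  show ?thesis
  proof (cases "0 \<le> z")
    case True
    then show ?thesis using m by (cases b) (simp_all add: Bfa_def Op_famPl Op_famQl)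
  next
    case False
    then have "0 < nat (- z)" by simp
    then show ?thesis using m False by (cases b) (simp_all add: Bfa_def Op_famPr Op_famQr)
  qed
qed

lemma Op_lincomb: "finite J \<Longrightarrow> (\<And>j. j \<in> J \<Longrightarrow> b j \<in> FA) \<Longrightarrow>
   Op q (lincomb c b J) v = (\<lambda>m. \<Sum>j\<in>J. c j * Op q (b j) v m)"
proof (induct J rule: finite_induct)
  case empty
  have "lincomb c b {} = fzero" by (simp add: lincomb_def fzero_def)
  then show ?case by (simp add: Op_fzero)
next
  case (insert x F)
  then show ?case by (simp add: lincomb_insert Op_fadd Op_fsc)
qed

lemma indep:
  assumes q: "q \<noteq> 0" and fin: "finite J" and inj: "inj_on \<mu> J"
    and bj: "\<And>j. j \<in> J \<Longrightarrow> b j = Bfa (\<mu> j)"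
    and e: "eqU q (lincomb c b J) fzero"
  shows "\<forall>j\<in>J. c j = 0"
proof
  fix j0 assume j0: "j0 \<in> J"
  have bFA: "\<And>j. j \<in> J \<Longrightarrow> b j \<in> FA" using bj by simp
  have "Op q (lincomb c b J) e0 = Op q fzero e0"
    using e by (rule eqU_Op[OF q]) (simp_all add: fin bFA)
  then have "Op q (lincomb c b J) e0 (\<mu> j0) = 0" by (simp add: Op_fzero)
  moreover have "Op q (lincomb c b J) e0 (\<mu> j0) = (\<Sum>j\<in>J. c j * delta (\<mu> j) (\<mu> j0))"
    using fin bFA by (simp add: Op_lincomb bj Op_Bfa)
  moreover have "(\<Sum>j\<in>J. c j * delta (\<mu> j) (\<mu> j0)) = (\<Sum>j\<in>J. if j = j0 then c j else 0)"
    using inj j0 by (intro sum.cong) (auto simp: delta_def dest: inj_onD)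
  moreover have "(\<Sum>j\<in>J. if j = j0 then c j else 0) = c j0" using fin j0 by simp
  ultimately show "c j0 = 0" by simp
qed


lemma Span_idx: "y \<in> Span \<Longrightarrow> \<exists>S c. finite S \<and> y = (\<Sum>m\<in>S. Sc (c m) * W m)"
proof -
  assume "y \<in> Span"
  then obtain U c where U: "finite U" "U \<subseteq> range W" "y = (\<Sum>u\<in>U. Sc (c u) * u)"
    using Span_sum by blast
  define \<sigma> where "\<sigma> u = (SOME m. W m = u)" for u
  have W\<sigma>: "W (\<sigma> u) = u" if "u \<in> U" for u
  proof -
    have "\<exists>m. W m = u" using U(2) that by blast
    then show ?thesis unfolding \<sigma>_def by (rule someI_ex)
  qed
  have inj: "inj_on \<sigma> U"
  proof (rule inj_onI)
    fix x y assume xy: "x \<in> U" "y \<in> U" "\<sigma> x = \<sigma> y"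
    have "x = W (\<sigma> x)" using W\<sigma>[OF xy(1)] by (rule sym)
    also have "\<dots> = W (\<sigma> y)" by (simp only: xy(3))
    also have "\<dots> = y" by (rule W\<sigma>[OF xy(2)])
    finally show "x = y" .
  qed
  have "(\<Sum>m\<in>\<sigma> ` U. Sc (c (W m)) * W m) = (\<Sum>u\<in>U. Sc (c (W (\<sigma> u))) * W (\<sigma> u))"
    by (rule sum.reindex[OF inj, unfolded comp_def])
  also have "\<dots> = y" using U(3) by (auto simp: W\<sigma> intro!: sum.cong)
  finally show ?thesis using U(1) by (metis finite_imageI)
qed

lemma span_q: "q \<noteq> 0 \<Longrightarrow> (\<And>q. X q \<in> FA) \<Longrightarrow> finite S \<Longrightarrow> abs_uq X = (\<Sum>m\<in>S. Sc (c m) * W m)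
   \<Longrightarrow> eqU q (X q) (lincomb (\<lambda>m. c m q) Bfa S)"
proof -
  assume q: "q \<noteq> 0" and X: "\<And>q. X q \<in> FA" and S: "finite S" and e: "abs_uq X = (\<Sum>m\<in>S. Sc (c m) * W m)"
  have "abs_uq (\<lambda>q. lincomb (\<lambda>m. c m q) Bfa S) = (\<Sum>m\<in>S. Sc (c m) * W m)"
    using S by (simp add: abs_lincomb abs_Bfa)
  then have "abs_uq X = abs_uq (\<lambda>q. lincomb (\<lambda>m. c m q) Bfa S)" using e by simp
  then show ?thesis using X S q by (intro uq_eqD[where X=X and Y="\<lambda>q. lincomb (\<lambda>m. c m q) Bfa S"]) auto
qed

lemma span_reindex:
  assumes S: "finite S" and sub: "S \<subseteq> \<mu> ` J" and inj: "inj_on \<mu> J" and bj: "\<And>j. j \<in> J \<Longrightarrow> b j = Bfa (\<mu> j)"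
  shows "\<exists>J' c'. J' \<subseteq> J \<and> finite J' \<and> lincomb c' b J' = lincomb c Bfa S"
proof -
  let ?\<iota> = "inv_into J \<mu>"
  have inj2: "inj_on ?\<iota> S" using sub by (rule inj_on_inv_into)
  have in1: "?\<iota> m \<in> J" if "m \<in> S" for m using sub that by (auto intro: inv_into_into)
  have in2: "\<mu> (?\<iota> m) = m" if "m \<in> S" for m using sub that by (auto intro: f_inv_into_f)
  have "lincomb (\<lambda>j. c (\<mu> j)) b (?\<iota> ` S) = lincomb c Bfa S"
  proof (rule fa_ext)
    fix w
    have "lincomb (\<lambda>j. c (\<mu> j)) b (?\<iota> ` S) w = (\<Sum>m\<in>S. c (\<mu> (?\<iota> m)) * b (?\<iota> m) w)"
      unfolding lincomb_def by (rule sum.reindex[OF inj2, unfolded comp_def])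
    also have "\<dots> = lincomb c Bfa S w"
      unfolding lincomb_def by (rule sum.cong) (auto simp: in2 bj in1)
    finally show "lincomb (\<lambda>j. c (\<mu> j)) b (?\<iota> ` S) w = lincomb c Bfa S w" .
  qed
  moreover have "?\<iota> ` S \<subseteq> J" using in1 by auto
  ultimately show ?thesis using S by blast
qed

definition mI :: "bool \<Rightarrow> (nat \<times> nat \<times> nat) + (nat \<times> nat \<times> nat) \<Rightarrow> idx" where
  "mI b x = (case x of Inl (i, j, k) \<Rightarrow> (b, int i, j, k) | Inr (i, j, k) \<Rightarrow> (b, - int i, j, k))"

definition famA :: "bool \<Rightarrow> (nat \<times> nat \<times> nat) + (nat \<times> nat \<times> nat) \<Rightarrow> fa" where
  "famA a = (if a then fam Pe gK gKb else fam Qe gL gLb)"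

definition Xa :: "bool \<Rightarrow> fa" where "Xa a = (if a then Pe else Qe)"

lemma Xa_FA[simp]: "Xa a \<in> FA" by (simp add: Xa_def)
lemma abs_Xa: "abs_uq (\<lambda>q. Xa a) = gP a" by (simp add: Xa_def gP_def abs_Pe abs_Qe)

lemma famA_Bfa: "x \<in> famidx ev \<Longrightarrow> famA a x = Bfa (mI a x)"
  by (auto simp: famidx_def famA_def mI_def Bfa_def)

lemma mI_inj: "inj_on (mI a) (famidx ev)"
  by (rule inj_onI) (auto simp: famidx_def mI_def)

lemma mI_fst: "fst (mI a x) = a" by (auto simp: mI_def split: sum.split)

lemma mI_rt: "x \<in> famidx ev \<Longrightarrow> rt (mI a x) = (if ev then a else \<not> a)"
  by (auto simp: famidx_def mI_def rt_def)

lemma mI_surj: "fst m = a \<Longrightarrow> even (fst (snd (snd m)) + snd (snd (snd m))) = ev \<Longrightarrow> m \<in> mI a ` famidx ev"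
proof -
  assume a: "fst m = a" and e: "even (fst (snd (snd m)) + snd (snd (snd m))) = ev"
  obtain b z j k where m: "m = (b, z, j, k)" by (cases m) auto
  show ?thesis
  proof (cases "0 \<le> z")
    case True
    then have "m = mI a (Inl (nat z, j, k))" using a m by (simp add: mI_def)
    moreover have "Inl (nat z, j, k) \<in> famidx ev" using e m by (simp add: famidx_def)
    ultimately show ?thesis by blast
  next
    case False
    then have "m = mI a (Inr (nat (- z), j, k))" using a m by (simp add: mI_def)
    moreover have "Inr (nat (- z), j, k) \<in> famidx ev" using e m False by (simp add: famidx_def)
    ultimately show ?thesis by blast
  qed
qed

lemma rt_par: "rt m = c \<Longrightarrow> even (fst (snd (snd m)) + snd (snd (snd m))) = (c = fst m)"
proof -
  assume r: "rt m = c"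
  obtain b z j k where m: "m = (b, z, j, k)" by (cases m) auto
  show ?thesis using r m by (cases "even j"; cases "even k") (auto simp: rt_def)
qed

lemma corner_W: "fst m = a \<Longrightarrow> rt m = c \<Longrightarrow> gP a * W m * gP c = W m"
  by (simp add: gP_W' W_gP)

lemma corner_basis:
  assumes q: "q \<noteq> 0" and c_def: "c = (if ev then a else \<not> a)"
  shows "basisU q (sandwich (Xa a) (Xa c)) (famidx ev) (famA a)"
  unfolding basisU_def
proof (intro conjI ballI allI impI)
  fix x assume x: "x \<in> famidx ev"
  have fA: "famA a x = Bfa (mI a x)" using x by (rule famA_Bfa)
  show "famA a x \<in> FA" by (simp add: fA)
  show "inU q (sandwich (Xa a) (Xa c)) (famA a x)"
    unfolding inU_def
  proof (rule bexI)
    show "fmul3 (Xa a) (famA a x) (Xa c) \<in> sandwich (Xa a) (Xa c)"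
      unfolding sandwich_def by (auto simp: fA)
    have "abs_uq (\<lambda>q. fmul3 (Xa a) (famA a x) (Xa c)) = gP a * W (mI a x) * gP c"
      by (simp add: fA abs_cmul abs_Xa abs_Bfa)
    also have "\<dots> = W (mI a x)" using x by (intro corner_W) (simp_all add: mI_fst mI_rt c_def)
    finally have "abs_uq (\<lambda>q. famA a x) = abs_uq (\<lambda>q. fmul3 (Xa a) (famA a x) (Xa c))"
      by (simp add: fA abs_Bfa)
    then show "eqU q (famA a x) (fmul3 (Xa a) (famA a x) (Xa c))"
      using q by (intro uq_eqD[where X="\<lambda>q. famA a x" and Y="\<lambda>q. fmul3 (Xa a) (famA a x) (Xa c)"]) (auto simp: fA)
  qed
next
  fix x assume x: "x \<in> FA" and inu: "inU q (sandwich (Xa a) (Xa c)) x"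
  then obtain u where u: "u \<in> FA" and ex: "eqU q x (fmul3 (Xa a) u (Xa c))"
    unfolding inU_def sandwich_def by blast
  obtain S f where S: "finite S" and uS: "abs_uq (\<lambda>q. u) = (\<Sum>m\<in>S. Sc (f m) * W m)"
    using Span_idx[OF FA_Span[OF u]] by blast
  let ?S = "{m\<in>S. fst m = a \<and> rt m = c}"
  have "abs_uq (\<lambda>q. fmul3 (Xa a) u (Xa c)) = gP a * abs_uq (\<lambda>q. u) * gP c"
    using u by (simp add: abs_cmul abs_Xa)
  also have "\<dots> = (\<Sum>m\<in>?S. Sc (f m) * W m)" unfolding uS using S by (rule corner_sum)
  finally have "eqU q (fmul3 (Xa a) u (Xa c)) (lincomb (\<lambda>m. f m q) Bfa ?S)"
    using q S u by (intro span_q) auto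
  then have e2: "eqU q x (lincomb (\<lambda>m. f m q) Bfa ?S)" using ex by (rule eqU_trans[rotated])
  have sub: "?S \<subseteq> mI a ` famidx ev"
  proof
    fix m assume "m \<in> ?S"
    then have fa: "fst m = a" and r: "rt m = c" by auto
    have "even (fst (snd (snd m)) + snd (snd (snd m))) = (c = fst m)" using r by (rule rt_par)
    then have "even (fst (snd (snd m)) + snd (snd (snd m))) = ev"
      using fa c_def by (cases ev) (auto simp del: even_add)
    then show "m \<in> mI a ` famidx ev" using fa by (intro mI_surj)
  qed
  have finS: "finite ?S" using S by simp
  have bj: "\<And>j. j \<in> famidx ev \<Longrightarrow> famA a j = Bfa (mI a j)" by (rule famA_Bfa)
  obtain J' c' where A: "J' \<subseteq> famidx ev" "finite J'" and L: "lincomb c' (famA a) J' = lincomb (\<lambda>m. f m q) Bfa ?S"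
    using span_reindex[OF finS sub mI_inj bj] by blast
  have "eqU q x (lincomb c' (famA a) J')" using e2 unfolding L .
  then show "\<exists>J' c. J' \<subseteq> famidx ev \<and> finite J' \<and> eqU q x (lincomb c (famA a) J')"
    using A by blast
next
  fix J' cc j assume H: "J' \<subseteq> famidx ev \<and> finite J' \<and> eqU q (lincomb cc (famA a) J') fzero"
    and jJ: "j \<in> J'"
  then have J1: "J' \<subseteq> famidx ev" and J2: "finite J'" and J3: "eqU q (lincomb cc (famA a) J') fzero"
    by auto
  have inj: "inj_on (mI a) J'" using mI_inj J1 by (rule inj_on_subset)
  have bj: "\<And>j. j \<in> J' \<Longrightarrow> famA a j = Bfa (mI a j)" using J1 by (auto intro: famA_Bfa)
  show "cc j = 0" using indep[OF q J2 inj bj J3] jJ by blast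
qed


definition IU :: "(nat \<times> ((nat \<times> nat \<times> nat) + (nat \<times> nat \<times> nat))) set" where
  "IU = {(0::nat, x) | x. x \<in> famidx True} \<union> {(1, x) | x. x \<in> famidx False} \<union>
        {(2, x) | x. x \<in> famidx False} \<union> {(3, x) | x. x \<in> famidx True}"

definition FU :: "nat \<times> ((nat \<times> nat \<times> nat) + (nat \<times> nat \<times> nat)) \<Rightarrow> fa" where
  "FU = (\<lambda>(n, x). if n \<le> 1 then fam Pe gK gKb x else fam Qe gL gLb x)"

definition muU :: "nat \<times> ((nat \<times> nat \<times> nat) + (nat \<times> nat \<times> nat)) \<Rightarrow> idx" where
  "muU = (\<lambda>(n, x). mI (n \<le> 1) x)"

lemma IU_cases: "p \<in> IU \<Longrightarrow> \<exists>n x. p = (n, x) \<and> x \<in> famidx (n = 0 \<or> n = 3) \<and> n \<le> 3"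
  by (auto simp: IU_def)

lemma FU_Bfa: "p \<in> IU \<Longrightarrow> FU p = Bfa (muU p)"
proof -
  assume "p \<in> IU"
  then obtain n x where p: "p = (n, x)" and x: "x \<in> famidx (n = 0 \<or> n = 3)" using IU_cases by blast
  have "famA (n \<le> 1) x = Bfa (mI (n \<le> 1) x)" using x by (rule famA_Bfa)
  then show ?thesis using p by (simp add: FU_def muU_def famA_def split: if_splits)
qed

lemma mI_parity: "x \<in> famidx ev \<Longrightarrow> even (fst (snd (snd (mI a x))) + snd (snd (snd (mI a x)))) = ev"
  by (auto simp: famidx_def mI_def)

lemma muU_inj: "inj_on muU IU"
proof (rule inj_onI)
  fix p p' assume p: "p \<in> IU" and p': "p' \<in> IU" and e: "muU p = muU p'"
  obtain n x where pp: "p = (n, x)" and x: "x \<in> famidx (n = 0 \<or> n = 3)" and n: "n \<le> 3"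
    using IU_cases[OF p] by blast
  obtain n' x' where pp': "p' = (n', x')" and x': "x' \<in> famidx (n' = 0 \<or> n' = 3)" and n': "n' \<le> 3"
    using IU_cases[OF p'] by blast
  have e': "mI (n \<le> 1) x = mI (n' \<le> 1) x'" using e pp pp' by (simp add: muU_def)
  have b: "(n \<le> 1) = (n' \<le> 1)" using arg_cong[OF e', of fst] by (simp add: mI_fst)
  have par: "(n = 0 \<or> n = 3) = (n' = 0 \<or> n' = 3)"
    using mI_parity[OF x, of "n \<le> 1"] mI_parity[OF x', of "n' \<le> 1"] e' by simp
  have nn: "n = n'" using b par n n' by auto
  have "x = x'" using mI_inj[of "n \<le> 1" "n = 0 \<or> n = 3"] x x' e' nn by (auto dest: inj_onD)
  then show "p = p'" using pp pp' nn by simp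
qed

lemma muU_surj: "m \<in> muU ` IU"
proof -
  obtain b z j k where m: "m = (b, z, j, k)" by (cases m) auto
  let ?ev = "even (j + k)"
  have "m \<in> mI b ` famidx ?ev" using m by (intro mI_surj) auto
  then obtain x where x: "x \<in> famidx ?ev" and mx: "m = mI b x" by blast
  let ?n = "if b then (if ?ev then 0 else 1) else (if ?ev then 3 else 2) :: nat"
  have "(?n, x) \<in> IU" using x by (auto simp: IU_def)
  moreover have "muU (?n, x) = m" using mx by (simp add: muU_def)
  ultimately show ?thesis by (metis image_eqI)
qed

lemma global_basis: "q \<noteq> 0 \<Longrightarrow> basisU q FA IU FU"
  unfolding basisU_def
proof (intro conjI ballI allI impI)
  fix p assume p: "p \<in> IU"
  show "FU p \<in> FA" using FU_Bfa[OF p] by simp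
  then show "inU q FA (FU p)" unfolding inU_def by (intro bexI[of _ "FU p"]) auto
next
  fix x assume q: "q \<noteq> 0" and x: "x \<in> FA"
  obtain S f where S: "finite S" and uS: "abs_uq (\<lambda>q. x) = (\<Sum>m\<in>S. Sc (f m) * W m)"
    using Span_idx[OF FA_Span[OF x]] by blast
  have e: "eqU q x (lincomb (\<lambda>m. f m q) Bfa S)"
    using span_q[of q "\<lambda>q. x", OF q _ S uS] x by simp
  have sub: "S \<subseteq> muU ` IU" using muU_surj by blast
  obtain J' c' where A: "J' \<subseteq> IU" "finite J'" and L: "lincomb c' FU J' = lincomb (\<lambda>m. f m q) Bfa S"
    using span_reindex[OF S sub muU_inj FU_Bfa] by blast
  have "eqU q x (lincomb c' FU J')" using e unfolding L .
  then show "\<exists>J' c. J' \<subseteq> IU \<and> finite J' \<and> eqU q x (lincomb c FU J')" using A by blast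
next
  fix J' cc j assume q: "q \<noteq> 0" and H: "J' \<subseteq> IU \<and> finite J' \<and> eqU q (lincomb cc FU J') fzero"
    and jJ: "j \<in> J'"
  then have J1: "J' \<subseteq> IU" and J2: "finite J'" and J3: "eqU q (lincomb cc FU J') fzero" by auto
  have inj: "inj_on muU J'" using muU_inj J1 by (rule inj_on_subset)
  have bj: "\<And>j. j \<in> J' \<Longrightarrow> FU j = Bfa (muU j)" using J1 by (auto intro: FU_Bfa)
  show "cc j = 0" using indep[OF q J2 inj bj J3] jJ by blast
qed


lemma sand: "gP a * (gP a' * U * gP c') * gP c = (if a = a' \<and> c = c' then gP a * U * gP c else 0)"
proof -
  have "gP a * (gP a' * U * gP c') * gP c = (gP a * gP a') * U * (gP c' * gP c)" by (simp add: mult.assoc)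
  then show ?thesis by (auto simp: gP_gP)
qed

lemma pierce1:
  assumes q: "q \<noteq> 0" and x: "x \<in> FA"
  shows "eqU q x (fadd (fadd (fmul3 Pe x Pe) (fmul3 Pe x Qe)) (fadd (fmul3 Qe x Pe) (fmul3 Qe x Qe)))"
proof -
  let ?X = "abs_uq (\<lambda>q. x)"
  have "abs_uq (\<lambda>q. fadd (fadd (fmul3 Pe x Pe) (fmul3 Pe x Qe)) (fadd (fmul3 Qe x Pe) (fmul3 Qe x Qe)))
     = uP * ?X * uP + uP * ?X * uQ + (uQ * ?X * uP + uQ * ?X * uQ)"
    using x by (simp add: abs_add abs_cmul abs_Pe abs_Qe)
  also have "\<dots> = (uP + uQ) * ?X * (uP + uQ)" by (simp add: algebra_simps)
  also have "\<dots> = ?X" by (simp add: PQ1)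
  finally have "abs_uq (\<lambda>q. x) = abs_uq (\<lambda>q. fadd (fadd (fmul3 Pe x Pe) (fmul3 Pe x Qe)) (fadd (fmul3 Qe x Pe) (fmul3 Qe x Qe)))"
    by simp
  then show ?thesis using q x
    by (intro uq_eqD[where X="\<lambda>q. x" and Y="\<lambda>q. fadd (fadd (fmul3 Pe x Pe) (fmul3 Pe x Qe)) (fadd (fmul3 Qe x Pe) (fmul3 Qe x Qe))"]) auto
qed

definition sel :: "bool \<Rightarrow> bool \<Rightarrow> fa \<Rightarrow> fa \<Rightarrow> fa \<Rightarrow> fa \<Rightarrow> fa" where
  "sel a c u1 u2 u3 u4 = (if a then (if c then u1 else u2) else (if c then u3 else u4))"

lemma pierce_corner:
  assumes q: "q \<noteq> 0" and u: "u1 \<in> FA" "u2 \<in> FA" "u3 \<in> FA" "u4 \<in> FA"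
    and H: "eqU q (fadd (fadd (fmul3 Pe u1 Pe) (fmul3 Pe u2 Qe)) (fadd (fmul3 Qe u3 Pe) (fmul3 Qe u4 Qe))) fzero"
  shows "eqU q (fmul3 (Xa a) (sel a c u1 u2 u3 u4) (Xa c)) fzero"
proof -
  let ?T = "fadd (fadd (fmul3 Pe u1 Pe) (fmul3 Pe u2 Qe)) (fadd (fmul3 Qe u3 Pe) (fmul3 Qe u4 Qe))"
  have TFA: "?T \<in> FA" using u by simp
  have e1: "eqU q (fmul (Xa a) ?T) (fmul (Xa a) fzero)"
    by (rule eqU_mul[OF eqU_refl H]) simp_all
  have e2: "eqU q (fmul3 (Xa a) ?T (Xa c)) (fmul3 (Xa a) fzero (Xa c))"
    by (rule eqU_mul[OF e1 eqU_refl]) (simp_all add: TFA)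
  have e3: "eqU q (fmul3 (Xa a) ?T (Xa c)) fzero" using e2 by simp
  let ?U1 = "abs_uq (\<lambda>q. u1)" and ?U2 = "abs_uq (\<lambda>q. u2)"
    and ?U3 = "abs_uq (\<lambda>q. u3)" and ?U4 = "abs_uq (\<lambda>q. u4)"
  have "abs_uq (\<lambda>q. fmul3 (Xa a) ?T (Xa c)) = gP a * (gP True * ?U1 * gP True + gP True * ?U2 * gP False
      + (gP False * ?U3 * gP True + gP False * ?U4 * gP False)) * gP c"
    using u by (simp add: abs_add abs_cmul abs_Xa abs_Pe abs_Qe gP_def)
  also have "\<dots> = gP a * abs_uq (\<lambda>q. sel a c u1 u2 u3 u4) * gP c"
    by (simp only: distrib_left distrib_right sand) (cases a; cases c; simp add: sel_def)
  also have "\<dots> = abs_uq (\<lambda>q. fmul3 (Xa a) (sel a c u1 u2 u3 u4) (Xa c))"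
    using u by (simp add: abs_cmul abs_Xa sel_def)
  finally have "eqU q (fmul3 (Xa a) (sel a c u1 u2 u3 u4) (Xa c)) (fmul3 (Xa a) ?T (Xa c))"
    using q u by (intro uq_eqD[where X="\<lambda>q. fmul3 (Xa a) (sel a c u1 u2 u3 u4) (Xa c)"
        and Y="\<lambda>q. fmul3 (Xa a) ?T (Xa c)"]) (auto simp: sel_def)
  then show ?thesis using e3 by (rule eqU_trans)
qed


theorem proposition7:
  fixes q :: complex
  assumes "q \<noteq> 0" and "q \<noteq> 1" and "q \<noteq> -1"
  shows
    "(\<forall>x\<in>FA. \<exists>a\<in>sandwich Pe Pe. \<exists>b\<in>sandwich Pe Qe. \<exists>c\<in>sandwich Qe Pe. \<exists>d\<in>sandwich Qe Qe.
        eqU q x (fadd (fadd a b) (fadd c d))) \<and>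
     (\<forall>a\<in>sandwich Pe Pe. \<forall>b\<in>sandwich Pe Qe. \<forall>c\<in>sandwich Qe Pe. \<forall>d\<in>sandwich Qe Qe.
        eqU q (fadd (fadd a b) (fadd c d)) fzero \<longrightarrow>
        eqU q a fzero \<and> eqU q b fzero \<and> eqU q c fzero \<and> eqU q d fzero) \<and>
     basisU q (sandwich Pe Pe) (famidx True) (fam Pe gK gKb) \<and>
     basisU q (sandwich Pe Qe) (famidx False) (fam Pe gK gKb) \<and>
     basisU q (sandwich Qe Pe) (famidx False) (fam Qe gL gLb) \<and>
     basisU q (sandwich Qe Qe) (famidx True) (fam Qe gL gLb) \<and>
     basisU q FA
       ({(0::nat, x) | x. x \<in> famidx True} \<union> {(1, x) | x. x \<in> famidx False} \<union>
        {(2, x) | x. x \<in> famidx False} \<union> {(3, x) | x. x \<in> famidx True})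
       (\<lambda>(n, x). if n \<le> 1 then fam Pe gK gKb x else fam Qe gL gLb x)"
proof (intro conjI)
  have q: "q \<noteq> 0" by fact
  show "\<forall>x\<in>FA. \<exists>a\<in>sandwich Pe Pe. \<exists>b\<in>sandwich Pe Qe. \<exists>c\<in>sandwich Qe Pe. \<exists>d\<in>sandwich Qe Qe.
        eqU q x (fadd (fadd a b) (fadd c d))"
  proof
    fix x assume x: "x \<in> FA"
    have m: "fmul3 X x Y \<in> sandwich X Y" for X Y using x by (auto simp: sandwich_def)
    show "\<exists>a\<in>sandwich Pe Pe. \<exists>b\<in>sandwich Pe Qe. \<exists>c\<in>sandwich Qe Pe. \<exists>d\<in>sandwich Qe Qe.
        eqU q x (fadd (fadd a b) (fadd c d))"
      using pierce1[OF q x] m by blast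
  qed
  show "\<forall>a\<in>sandwich Pe Pe. \<forall>b\<in>sandwich Pe Qe. \<forall>c\<in>sandwich Qe Pe. \<forall>d\<in>sandwich Qe Qe.
        eqU q (fadd (fadd a b) (fadd c d)) fzero \<longrightarrow>
        eqU q a fzero \<and> eqU q b fzero \<and> eqU q c fzero \<and> eqU q d fzero"
  proof (intro ballI impI)
    fix a b c d assume a: "a \<in> sandwich Pe Pe" and b: "b \<in> sandwich Pe Qe"
      and c: "c \<in> sandwich Qe Pe" and d: "d \<in> sandwich Qe Qe"
      and H: "eqU q (fadd (fadd a b) (fadd c d)) fzero"
    obtain u1 where u1: "u1 \<in> FA" "a = fmul3 Pe u1 Pe" using a by (auto simp: sandwich_def)
    obtain u2 where u2: "u2 \<in> FA" "b = fmul3 Pe u2 Qe" using b by (auto simp: sandwich_def)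
    obtain u3 where u3: "u3 \<in> FA" "c = fmul3 Qe u3 Pe" using c by (auto simp: sandwich_def)
    obtain u4 where u4: "u4 \<in> FA" "d = fmul3 Qe u4 Qe" using d by (auto simp: sandwich_def)
    have H': "eqU q (fadd (fadd (fmul3 Pe u1 Pe) (fmul3 Pe u2 Qe)) (fadd (fmul3 Qe u3 Pe) (fmul3 Qe u4 Qe))) fzero"
      using H u1 u2 u3 u4 by simp
    note pc = pierce_corner[OF q u1(1) u2(1) u3(1) u4(1) H']
    show "eqU q a fzero \<and> eqU q b fzero \<and> eqU q c fzero \<and> eqU q d fzero"
      using pc[of True True] pc[of True False] pc[of False True] pc[of False False] u1 u2 u3 u4
      by (simp add: sel_def Xa_def)
  qed
  show "basisU q (sandwich Pe Pe) (famidx True) (fam Pe gK gKb)"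
    using corner_basis[OF q, of True True True] by (simp add: Xa_def famA_def)
  show "basisU q (sandwich Pe Qe) (famidx False) (fam Pe gK gKb)"
    using corner_basis[OF q, of False False True] by (simp add: Xa_def famA_def)
  show "basisU q (sandwich Qe Pe) (famidx False) (fam Qe gL gLb)"
    using corner_basis[OF q, of True False False] by (simp add: Xa_def famA_def)
  show "basisU q (sandwich Qe Qe) (famidx True) (fam Qe gL gLb)"
    using corner_basis[OF q, of False True False] by (simp add: Xa_def famA_def)
  show "basisU q FA
       ({(0::nat, x) | x. x \<in> famidx True} \<union> {(1, x) | x. x \<in> famidx False} \<union>
        {(2, x) | x. x \<in> famidx False} \<union> {(3, x) | x. x \<in> famidx True})
       (\<lambda>(n, x). if n \<le> 1 then fam Pe gK gKb x else fam Qe gL gLb x)"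
    using global_basis[OF q] unfolding IU_def FU_def .
qed


end
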